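(* Let $k\in\mathbb N$, $1\le p\le\infty$, $\alpha,\beta\in J_p$, and $f\in\mathbb M^k\cap\mathbb W_p^{\alpha,\beta}$. Then $\|w_{\alpha,\beta}T_{k-1}(f)\|_p\le c\|w_{\alpha,\beta}f\|_p$, with $c$ independent of $f$, where \[ T_{k-1}(f,x)=f_-^{(k-1)}(0)\frac{x^{k-1}}{(k-1)!}+\sum_{i=0}^{k-2}f^{(i)}(0)\frac{x^i}{i!}. \]
   Context: $w_{\alpha,\beta}(x)=(1+x)^\alpha(1-x)^\beta$; $\|\cdot\|_p$ is the $L_p[-1,1]$ norm; $\mathbb W_p^{\alpha,\beta}=\{f:\|w_{\alpha,\beta}f\|_p<\infty\}$; $J_p=(-1/p,\infty)$ if $p<\infty$, $J_\infty=[0,\infty)$. $\mathbb M^k$ is the set of $f:(-1,1)\to\mathbb R$ whose $k$th divided differences at any $k+1$ distinct points of $(-1,1)$ are nonnegative; for $f\in\mathbb M^k$ the derivatives $f^{(j)}$, $j\le k-2$, exist on $(-1,1)$ and $f^{(k-1)}_-$ denotes the left derivative of $f^{(k-2)}$ (for $k=1$, $f^{(0)}_-(0)$ is the left limit $f(0^-)$). *)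

theory Defs
  imports "HOL-Analysis.Analysis" "HOL-Probability.Essential_Supremum"
begin

definition jw :: "real \<Rightarrow> real \<Rightarrow> real \<Rightarrow> real" where
  "jw a b x = (1 + x) powr a * (1 - x) powr b"

definition Lp_norm :: "ennreal \<Rightarrow> (real \<Rightarrow> real) \<Rightarrow> ennreal" where
  "Lp_norm p g =
     (if p = \<infinity> then esssup lebesgue (\<lambda>x. ennreal \<bar>g x\<bar> * indicator {-1..1} x)
      else (let r = enn2real p;
                I = (\<integral>\<^sup>+ x. ennreal (\<bar>g x\<bar> powr r) * indicator {-1..1} x \<partial>lebesgue)
            in if I = \<infinity> then \<infinity> else ennreal (enn2real I powr (1 / r))))"

definition Jp :: "ennreal \<Rightarrow> real set" where
  "Jp p = (if p = \<infinity> then {0..} else {-(1 / enn2real p)<..})"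

definition divdiff :: "(real \<Rightarrow> real) \<Rightarrow> nat \<Rightarrow> (nat \<Rightarrow> real) \<Rightarrow> real" where
  "divdiff f k x = (\<Sum>j=0..k. f (x j) / (\<Prod>i\<in>{0..k}-{j}. (x j - x i)))"

definition kmono :: "nat \<Rightarrow> (real \<Rightarrow> real) \<Rightarrow> bool" where
  "kmono k f \<longleftrightarrow> (\<forall>x::nat \<Rightarrow> real. (\<forall>i\<le>k. x i \<in> {-1<..<1}) \<and> inj_on x {0..k}
                      \<longrightarrow> divdiff f k x \<ge> 0)"

text \<open>Left derivative of the (k-2)th derivative at 0 (for k = 1: left limit f(0-)).\<close>
definition leftder :: "nat \<Rightarrow> (real \<Rightarrow> real) \<Rightarrow> real" where
  "leftder k f = (if k = 1 then Lim (at_left 0) f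
     else Lim (at_left 0) (\<lambda>h. ((deriv ^^ (k - 2)) f h - (deriv ^^ (k - 2)) f 0) / h))"

definition Taylor :: "nat \<Rightarrow> (real \<Rightarrow> real) \<Rightarrow> real \<Rightarrow> real" where
  "Taylor k f x = leftder k f * x ^ (k - 1) / fact (k - 1)
     + (\<Sum>i<k - 1. (deriv ^^ i) f 0 * x ^ i / fact i)"

end

theory Submission
  imports Defs
begin

definition DD :: "(real \<Rightarrow> real) \<Rightarrow> real set \<Rightarrow> real" where
  "DD g S = (\<Sum>y\<in>S. g y / (\<Prod>z\<in>S-{y}. (y - z)))"

lemma prod_insert_minus:
  assumes "finite A" "a \<in> A" "v \<notin> A"
  shows "(\<Prod>z\<in>insert v A - {a}. (a - z)) = (a - v) * (\<Prod>z\<in>A-{a}. (a - z))"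
proof -
  have "insert v A - {a} = insert v (A - {a})" using assms by auto
  then show ?thesis using assms by (simp add: prod.insert)
qed

lemma prod_nonzero:
  assumes "finite A" "a \<notin> A" shows "(\<Prod>z\<in>A. (a - z)) \<noteq> (0::real)"
  using assms by (simp add: prod_zero_iff) 

lemma DD_insert:
  assumes "finite A" "u \<notin> A"
  shows "DD g (insert u A) = (\<Sum>a\<in>A. g a / ((a - u) * (\<Prod>z\<in>A-{a}. (a-z)))) + g u / (\<Prod>z\<in>A. (u - z))"
proof -
  have "DD g (insert u A) = g u / (\<Prod>z\<in>insert u A - {u}. (u - z)) + (\<Sum>y\<in>A. g y / (\<Prod>z\<in>insert u A-{y}. (y - z)))"
    unfolding DD_def using assms by (simp add: sum.insert)
  also have "insert u A - {u} = A" using assms by auto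
  also have "(\<Sum>y\<in>A. g y / (\<Prod>z\<in>insert u A-{y}. (y - z))) = (\<Sum>a\<in>A. g a / ((a - u) * (\<Prod>z\<in>A-{a}. (a-z))))"
    by (rule sum.cong) (use assms prod_insert_minus in auto)
  finally show ?thesis by simp
qed

lemma DD_recur:
  assumes "finite A" "u \<notin> A" "v \<notin> A" "u \<noteq> v"
  shows "DD g (insert u A) - DD g (insert v A) = (u - v) * DD g (insert u (insert v A))"
proof -
  define P where "P a = (\<Prod>z\<in>A-{a}. (a-z))" for a
  have P0: "P a \<noteq> 0" if "a \<in> A" for a unfolding P_def using assms by (intro prod_nonzero) auto
  have Pu: "(\<Prod>z\<in>A. (u - z)) \<noteq> 0" "(\<Prod>z\<in>A. (v - z)) \<noteq> 0" using assms by (auto intro: prod_nonzero)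
  have e1: "DD g (insert u (insert v A)) = (\<Sum>a\<in>A. g a / ((a - u) * ((a - v) * P a)))
      + g v / ((v - u) * (\<Prod>z\<in>A. (v - z))) + g u / ((u - v) * (\<Prod>z\<in>A. (u - z)))"
  proof -
    have "DD g (insert u (insert v A)) = (\<Sum>b\<in>insert v A. g b / ((b - u) * (\<Prod>z\<in>insert v A-{b}. (b-z))))
       + g u / (\<Prod>z\<in>insert v A. (u - z))"
      using assms by (intro DD_insert) auto
    also have "(\<Sum>b\<in>insert v A. g b / ((b - u) * (\<Prod>z\<in>insert v A-{b}. (b-z))))
       = g v / ((v - u) * (\<Prod>z\<in>A. (v - z))) + (\<Sum>a\<in>A. g a / ((a - u) * ((a - v) * P a)))"
    proof -
      have "insert v A - {v} = A" using assms by auto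
      moreover have "(\<Sum>a\<in>A. g a / ((a - u) * (\<Prod>z\<in>insert v A-{a}. (a-z)))) = (\<Sum>a\<in>A. g a / ((a - u) * ((a - v) * P a)))"
        by (rule sum.cong) (use assms prod_insert_minus in \<open>auto simp: P_def\<close>)
      ultimately show ?thesis using assms by (simp add: sum.insert)
    qed
    also have "(\<Prod>z\<in>insert v A. (u - z)) = (u - v) * (\<Prod>z\<in>A. (u - z))" using assms by simp
    finally show ?thesis by simp
  qed
  have e2: "DD g (insert u A) = (\<Sum>a\<in>A. g a / ((a - u) * P a)) + g u / (\<Prod>z\<in>A. (u - z))"
    using DD_insert[OF assms(1,2)] by (simp add: P_def)
  have e3: "DD g (insert v A) = (\<Sum>a\<in>A. g a / ((a - v) * P a)) + g v / (\<Prod>z\<in>A. (v - z))"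
    using DD_insert[OF assms(1,3)] by (simp add: P_def)
  have s: "(\<Sum>a\<in>A. g a / ((a - u) * P a)) - (\<Sum>a\<in>A. g a / ((a - v) * P a))
     = (u - v) * (\<Sum>a\<in>A. g a / ((a - u) * ((a - v) * P a)))"
    unfolding sum_subtractf[symmetric] sum_distrib_left
  proof (rule sum.cong)
    fix a assume a: "a \<in> A"
    then have h: "a - u \<noteq> 0" "a - v \<noteq> 0" "P a \<noteq> 0" using assms P0 by auto
    then show "g a / ((a - u) * P a) - g a / ((a - v) * P a) = (u - v) * (g a / ((a - u) * ((a - v) * P a)))"
      by (simp add: divide_simps) (simp add: algebra_simps)
  qed simp
  have uv: "u - v \<noteq> 0" using assms by simp
  have gen: "X + gu / pu - (Y + gv / pv) = (u - v) * (Z + gv / ((v - u) * pv) + gu / ((u - v) * pu))"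
    if "X - Y = (u - v) * Z" "pu \<noteq> 0" "pv \<noteq> 0" for X Y Z gu gv pu pv :: real
  proof -
    have "(u - v) * (gv / ((v - u) * pv)) = - (gv / pv)" using uv that by (simp add: field_simps)
    moreover have "(u - v) * (gu / ((u - v) * pu)) = gu / pu" using uv that by (simp add: field_simps)
    ultimately show ?thesis using that(1) by (simp add: algebra_simps)
  qed
  show ?thesis unfolding e1 e2 e3 by (rule gen[OF s Pu])
qed

lemma DD_tel:
  assumes "finite S" "finite A" "inj_on \<phi> S" "\<phi> ` S \<inter> S = {}" "A \<inter> S = {}" "A \<inter> \<phi> ` S = {}"
  shows "\<exists>U. (\<forall>s\<in>S. U s \<subseteq> A \<union> S \<union> \<phi> ` S \<and> finite (U s) \<and> card (U s) = card A + card S + 1)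
     \<and> DD g (A \<union> S) - DD g (A \<union> \<phi> ` S) = (\<Sum>s\<in>S. (s - \<phi> s) * DD g (U s))"
  using assms
proof (induction S arbitrary: A rule: finite_induct)
  case empty
  then show ?case by auto
next
  case (insert s S')
  define A' where "A' = insert (\<phi> s) A"
  have phis: "\<phi> s \<notin> insert s S'" using insert.prems by auto
  have phis2: "\<phi> s \<notin> \<phi> ` S'" using insert.prems insert.hyps by (auto simp: inj_on_def)
  have "\<exists>U. (\<forall>s\<in>S'. U s \<subseteq> A' \<union> S' \<union> \<phi> ` S' \<and> finite (U s) \<and> card (U s) = card A' + card S' + 1)
     \<and> DD g (A' \<union> S') - DD g (A' \<union> \<phi> ` S') = (\<Sum>s\<in>S'. (s - \<phi> s) * DD g (U s))"
    apply (rule insert.IH)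
    using insert.prems insert.hyps phis phis2 by (auto simp: A'_def inj_on_insert)
  then obtain U' where U': "\<forall>s\<in>S'. U' s \<subseteq> A' \<union> S' \<union> \<phi> ` S' \<and> finite (U' s) \<and> card (U' s) = card A' + card S' + 1"
     "DD g (A' \<union> S') - DD g (A' \<union> \<phi> ` S') = (\<Sum>s\<in>S'. (s - \<phi> s) * DD g (U' s))" by blast
  define B where "B = A \<union> S'"
  have fB: "finite B" using insert B_def by auto
  have sB: "s \<notin> B" using insert B_def by auto
  have pB: "\<phi> s \<notin> B" using insert.prems phis B_def by auto
  have sp: "s \<noteq> \<phi> s" using phis by auto
  define U where "U = U'(s := insert s (insert (\<phi> s) B))"
  have cardA': "card A' = card A + 1" using insert.prems phis A'_def by auto
  have cardU: "card (insert s (insert (\<phi> s) B)) = card A + card (insert s S') + 1"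
    using fB sB pB sp insert.prems insert.hyps by (simp add: B_def card_Un_disjoint)
  have e1: "A \<union> insert s S' = insert s B" by (auto simp: B_def)
  have e2: "A' \<union> S' = insert (\<phi> s) B" by (auto simp: B_def A'_def)
  have e3: "A \<union> \<phi> ` insert s S' = A' \<union> \<phi> ` S'" by (auto simp: A'_def)
  have "DD g (A \<union> insert s S') - DD g (A \<union> \<phi> ` insert s S')
     = (DD g (insert s B) - DD g (insert (\<phi> s) B)) + (DD g (A' \<union> S') - DD g (A' \<union> \<phi> ` S'))"
    unfolding e1 e3 e2 by simp
  also have "\<dots> = (s - \<phi> s) * DD g (U s) + (\<Sum>s\<in>S'. (s - \<phi> s) * DD g (U s))"
    unfolding DD_recur[OF fB sB pB sp] U'(2) U_def using insert.hyps by (auto intro!: sum.cong)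
  also have "\<dots> = (\<Sum>s\<in>insert s S'. (s - \<phi> s) * DD g (U s))" using insert.hyps by simp
  finally have eq: "DD g (A \<union> insert s S') - DD g (A \<union> \<phi> ` insert s S') = (\<Sum>s\<in>insert s S'. (s - \<phi> s) * DD g (U s))" .
  have "\<forall>t\<in>insert s S'. U t \<subseteq> A \<union> insert s S' \<union> \<phi> ` insert s S' \<and> finite (U t) \<and> card (U t) = card A + card (insert s S') + 1"
  proof
    fix t assume t: "t \<in> insert s S'"
    show "U t \<subseteq> A \<union> insert s S' \<union> \<phi> ` insert s S' \<and> finite (U t) \<and> card (U t) = card A + card (insert s S') + 1"
    proof (cases "t = s")
      case True
      then show ?thesis using cardU fB by (auto simp: U_def B_def)
    next
      case False
      then have "t \<in> S'" using t by auto
      then show ?thesis using U'(1) False cardA' insert.hyps by (auto simp: U_def A'_def)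
    qed
  qed
  with eq show ?case by blast
qed

lemma kmono_DD:
  assumes "kmono k f" "finite S" "S \<subseteq> {-1<..<1}" "card S = Suc k"
  shows "DD f S \<ge> 0"
proof -
  have "card {0..k} = card S" using assms by simp
  then obtain x where bx: "bij_betw x {0..k} S" using finite_same_card_bij[of "{0..k}" S] assms by auto
  have inj: "inj_on x {0..k}" and im: "x ` {0..k} = S" using bx by (auto simp: bij_betw_def)
  have xi: "\<forall>i\<le>k. x i \<in> {-1<..<1}"
  proof (intro allI impI)
    fix i assume "i \<le> k" then have "x i \<in> S" using im by auto
    then show "x i \<in> {-1<..<1}" using assms(3) by blast
  qed
  have "divdiff f k x \<ge> 0" using assms(1) xi inj unfolding kmono_def by blast
  moreover have "divdiff f k x = DD f S"
  proof -
    have "divdiff f k x = (\<Sum>j\<in>{0..k}. f (x j) / (\<Prod>z\<in>S-{x j}. (x j - z)))"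
      unfolding divdiff_def
    proof (rule sum.cong)
      fix j assume j: "j \<in> {0..k}"
      have "x ` ({0..k} - {j}) = S - {x j}" using inj im j by (auto simp: inj_on_def)
      moreover have "inj_on x ({0..k} - {j})" using inj by (auto simp: inj_on_def)
      ultimately have "(\<Prod>z\<in>S-{x j}. (x j - z)) = (\<Prod>i\<in>{0..k}-{j}. (x j - x i))"
        by (metis (no_types, lifting) prod.reindex_cong)
      then show "f (x j) / (\<Prod>i\<in>{0..k} - {j}. x j - x i) = f (x j) / (\<Prod>z\<in>S-{x j}. (x j - z))" by simp
    qed simp
    also have "\<dots> = DD f S" unfolding DD_def using sum.reindex_bij_betw[OF bx, of "\<lambda>y. f y / (\<Prod>z\<in>S-{y}. (y - z))"] by simp
    finally show ?thesis .
  qed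
  ultimately show ?thesis by simp
qed

lemma DD_compare_tel:
  assumes "finite S" "finite T" "card S = card T" "S \<inter> T = {}"
  obtains \<phi> U where "bij_betw \<phi> S T" "\<forall>s\<in>S. U s \<subseteq> S \<union> T \<and> finite (U s) \<and> card (U s) = card S + 1"
     "DD g S - DD g T = (\<Sum>s\<in>S. (s - \<phi> s) * DD g (U s))"
proof -
  obtain \<phi> where b: "bij_betw \<phi> S T" using finite_same_card_bij assms by blast
  then have "inj_on \<phi> S" "\<phi> ` S = T" by (auto simp: bij_betw_def)
  then obtain U where "(\<forall>s\<in>S. U s \<subseteq> {} \<union> S \<union> \<phi> ` S \<and> finite (U s) \<and> card (U s) = card {} + card S + 1)
     \<and> DD g ({} \<union> S) - DD g ({} \<union> \<phi> ` S) = (\<Sum>s\<in>S. (s - \<phi> s) * DD g (U s))"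
    using DD_tel[of S "{}" \<phi> g] assms by auto
  then show ?thesis using that[OF b, of U] \<open>\<phi> ` S = T\<close> by auto
qed

lemma DD_mono_sets:
  assumes "finite S" "finite T" "card S = card T" "\<forall>s\<in>S. \<forall>t\<in>T. s < t"
    and pos: "\<forall>U. U \<subseteq> S \<union> T \<and> finite U \<and> card U = card S + 1 \<longrightarrow> DD g U \<ge> 0"
  shows "DD g S \<le> DD g T"
proof -
  have "S \<inter> T = {}" using assms(4) by fastforce
  then obtain \<phi> U where b: "bij_betw \<phi> S T" and U: "\<forall>s\<in>S. U s \<subseteq> S \<union> T \<and> finite (U s) \<and> card (U s) = card S + 1"
     and e: "DD g S - DD g T = (\<Sum>s\<in>S. (s - \<phi> s) * DD g (U s))"
    using DD_compare_tel[OF assms(1-3)] by blast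
  have "(\<Sum>s\<in>S. (s - \<phi> s) * DD g (U s)) \<le> 0"
  proof (rule sum_nonpos)
    fix s assume s: "s \<in> S"
    then have "\<phi> s \<in> T" using b by (auto simp: bij_betw_def)
    then have "s - \<phi> s \<le> 0" using assms(4) s by force
    moreover have "DD g (U s) \<ge> 0" using pos U s by blast
    ultimately show "(s - \<phi> s) * DD g (U s) \<le> 0" by (simp add: mult_nonpos_nonneg)
  qed
  then show ?thesis using e by simp
qed

lemma DD_close_sets:
  fixes d M :: real
  assumes "finite S" "finite T" "card S = card T" "S \<inter> T = {}"
    and bnd: "\<forall>U. U \<subseteq> S \<union> T \<and> finite U \<and> card U = card S + 1 \<longrightarrow> \<bar>DD g U\<bar> \<le> M"
    and d: "\<forall>s\<in>S. \<forall>t\<in>T. \<bar>s - t\<bar> \<le> d"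
  shows "\<bar>DD g S - DD g T\<bar> \<le> real (card S) * d * M"
proof -
  obtain \<phi> U where b: "bij_betw \<phi> S T" and U: "\<forall>s\<in>S. U s \<subseteq> S \<union> T \<and> finite (U s) \<and> card (U s) = card S + 1"
     and e: "DD g S - DD g T = (\<Sum>s\<in>S. (s - \<phi> s) * DD g (U s))"
    using DD_compare_tel[OF assms(1-4)] by blast
  have "\<bar>DD g S - DD g T\<bar> \<le> (\<Sum>s\<in>S. \<bar>(s - \<phi> s) * DD g (U s)\<bar>)" unfolding e by (rule sum_abs)
  also have "\<dots> \<le> (\<Sum>s\<in>S. d * M :: real)"
  proof (rule sum_mono)
    fix s assume s: "s \<in> S"
    then have "\<phi> s \<in> T" using b by (auto simp: bij_betw_def)
    then have "\<bar>s - \<phi> s\<bar> \<le> d" using d s by blast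
    moreover have "\<bar>DD g (U s)\<bar> \<le> M" using bnd U s by blast
    ultimately show "\<bar>(s - \<phi> s) * DD g (U s)\<bar> \<le> d * M" by (simp add: abs_mult mult_mono')
  qed
  finally show ?thesis by simp
qed

lemma DD_translate:
  assumes "finite S"
  shows "DD g ((+) h ` S) = (\<Sum>s\<in>S. g (h + s) / (\<Prod>z\<in>S-{s}. (s - z)))"
proof -
  have inj: "inj_on ((+) h) A" for A :: "real set" by (auto simp: inj_on_def)
  have "DD g ((+) h ` S) = (\<Sum>s\<in>S. g (h + s) / (\<Prod>z\<in>(+) h ` S-{h + s}. (h + s - z)))"
    unfolding DD_def by (subst sum.reindex[OF inj]) simp
  also have "\<dots> = (\<Sum>s\<in>S. g (h + s) / (\<Prod>z\<in>S-{s}. (s - z)))"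
  proof (rule sum.cong)
    fix s assume "s \<in> S"
    have "(+) h ` S - {h + s} = (+) h ` (S - {s})" by auto
    then have "(\<Prod>z\<in>(+) h ` S-{h + s}. (h + s - z)) = (\<Prod>z\<in>S-{s}. (h + s - (h + z)))"
      by (simp add: prod.reindex[OF inj])
    then show "g (h + s) / (\<Prod>z\<in>(+) h ` S-{h + s}. (h + s - z)) = g (h + s) / (\<Prod>z\<in>S-{s}. (s - z))" by simp
  qed simp
  finally show ?thesis .
qed

lemma DD_deriv_lim:
  assumes "finite S" "\<forall>s\<in>S. (g has_real_derivative g' s) (at s)"
  shows "((\<lambda>h. (DD g ((+) h ` S) - DD g S) / h) \<longlongrightarrow> DD g' S) (at 0)"
proof -
  have lim: "((\<lambda>h. \<Sum>s\<in>S. ((g (s + h) - g s) / h) / (\<Prod>z\<in>S-{s}. (s - z))) \<longlongrightarrow> DD g' S) (at 0)"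
    unfolding DD_def
    by (intro tendsto_intros) (use assms DERIV_D in auto)
  have eq: "(DD g ((+) h ` S) - DD g S) / h = (\<Sum>s\<in>S. ((g (s + h) - g s) / h) / (\<Prod>z\<in>S-{s}. (s - z)))" for h
  proof -
    have "DD g ((+) h ` S) - DD g S = (\<Sum>s\<in>S. g (h + s) / (\<Prod>z\<in>S-{s}. (s - z)) - g s / (\<Prod>z\<in>S-{s}. (s - z)))"
      unfolding DD_translate[OF assms(1)] by (simp add: DD_def sum_subtractf)
    then have "(DD g ((+) h ` S) - DD g S) / h = (\<Sum>s\<in>S. (g (h + s) / (\<Prod>z\<in>S-{s}. (s - z)) - g s / (\<Prod>z\<in>S-{s}. (s - z))) / h)"
      by (simp add: sum_divide_distrib)
    also have "\<dots> = (\<Sum>s\<in>S. ((g (s + h) - g s) / h) / (\<Prod>z\<in>S-{s}. (s - z)))"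
      by (rule sum.cong) (simp_all add: diff_divide_distrib divide_divide_eq_left mult.commute add.commute)
    finally show ?thesis .
  qed
  show ?thesis unfolding eq by (rule lim)
qed

lemma DD_shift_tel:
  assumes "finite S"
  shows "eventually (\<lambda>h. h > 0 \<and> (\<exists>U. (\<forall>s\<in>S. U s \<subseteq> S \<union> (+) h ` S \<and> finite (U s) \<and> card (U s) = card S + 1)
     \<and> (DD g ((+) h ` S) - DD g S) / h = (\<Sum>s\<in>S. DD g (U s)))) (at_right 0)"
proof -
  have ev: "eventually (\<lambda>h. h > 0 \<and> (\<forall>s\<in>S. \<forall>s'\<in>S. h \<noteq> s' - s)) (at_right (0::real))"
  proof -
    have "eventually (\<lambda>h. h \<noteq> s' - s) (at_right (0::real))" for s s'
    proof (cases "s' - s > 0")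
      case True
      have "eventually (\<lambda>h. h < s' - s) (at_right (0::real))" using True eventually_at_right by blast
      then show ?thesis by eventually_elim auto
    next
      case False
      have "eventually (\<lambda>h. h > 0) (at_right (0::real))" by (simp add: eventually_at_right_less)
      then show ?thesis by eventually_elim (use False in auto)
    qed
    then have "eventually (\<lambda>h. \<forall>s\<in>S. \<forall>s'\<in>S. h \<noteq> s' - s) (at_right (0::real))"
      using assms by (auto intro!: eventually_ball_finite)
    moreover have "eventually (\<lambda>h. h > 0) (at_right (0::real))" by (simp add: eventually_at_right_less)
    ultimately show ?thesis by eventually_elim auto
  qed
  show ?thesis using ev
  proof eventually_elim
    case (elim h)
    have inj: "inj_on ((+) h) S" by (auto simp: inj_on_def)
    have disj: "(+) h ` S \<inter> S = {}" using elim by force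
    obtain U where U: "(\<forall>s\<in>S. U s \<subseteq> {} \<union> S \<union> (+) h ` S \<and> finite (U s) \<and> card (U s) = card {} + card S + 1)"
      and e: "DD g ({} \<union> S) - DD g ({} \<union> (+) h ` S) = (\<Sum>s\<in>S. (s - (h + s)) * DD g (U s))"
      using DD_tel[OF assms _ inj disj, of "{}" g] by auto
    have "(DD g ((+) h ` S) - DD g S) / h = (\<Sum>s\<in>S. DD g (U s))"
    proof -
      have "DD g ((+) h ` S) - DD g S = h * (\<Sum>s\<in>S. DD g (U s))"
      proof -
        have "DD g S - DD g ((+) h ` S) = - (h * (\<Sum>s\<in>S. DD g (U s)))"
          using e by (simp add: sum_distrib_left sum_negf[symmetric])
        then show ?thesis by linarith
      qed
      then show ?thesis using elim by simp
    qed
    then show ?case using U elim by auto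
  qed
qed

lemma DD_deriv_bound:
  fixes R R' lo hi :: real
  assumes "finite S" "S \<subseteq> {-R'..R'}" "R' < R"
    and dif: "\<forall>x\<in>{-R<..<R}. g differentiable (at x)"
    and bnd: "\<forall>U. U \<subseteq> {-R..R} \<and> finite U \<and> card U = card S + 1 \<longrightarrow> P (DD g U)"
    and Pgen: "\<And>u. (\<forall>s\<in>S. P (u s)) \<Longrightarrow> Q (\<Sum>s\<in>S. u s)" and Qcl: "closed {x. Q x}"
  shows "Q (DD (deriv g) S)"
proof -
  have der: "\<forall>s\<in>S. (g has_real_derivative deriv g s) (at s)"
  proof
    fix s assume "s \<in> S"
    then have "-R' \<le> s" "s \<le> R'" using assms(2) by auto
    then have "s \<in> {-R<..<R}" using assms(3) by simp
    then show "(g has_real_derivative deriv g s) (at s)"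
      using dif DERIV_deriv_iff_real_differentiable[of g s] by simp
  qed
  have lim: "((\<lambda>h. (DD g ((+) h ` S) - DD g S) / h) \<longlongrightarrow> DD (deriv g) S) (at_right 0)"
    by (rule tendsto_mono[OF at_le[of "{0<..}" UNIV] DD_deriv_lim[OF assms(1) der]]) simp
  have ev2: "eventually (\<lambda>h::real. h < R - R') (at_right 0)"
    by (subst eventually_at_right[of 0 "R - R'"]) (use assms(3) in \<open>auto intro!: exI[of _ "R - R'"]\<close>)
  have "eventually (\<lambda>h. Q ((DD g ((+) h ` S) - DD g S) / h)) (at_right 0)"
    using DD_shift_tel[OF assms(1), of g] ev2
  proof eventually_elim
    case (elim h)
    then obtain U where U: "\<forall>s\<in>S. U s \<subseteq> S \<union> (+) h ` S \<and> finite (U s) \<and> card (U s) = card S + 1"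
      and e: "(DD g ((+) h ` S) - DD g S) / h = (\<Sum>s\<in>S. DD g (U s))" by blast
    have sub: "S \<union> (+) h ` S \<subseteq> {-R..R}"
    proof
      fix y assume "y \<in> S \<union> (+) h ` S"
      then consider "y \<in> S" | s where "s \<in> S" "y = h + s" by blast
      then show "y \<in> {-R..R}"
      proof cases
        case 1 then show ?thesis using assms(2,3) by force
      next
        case 2 then have "s \<in> {-R'..R'}" using assms(2) by blast
        then show ?thesis using 2 elim by simp
      qed
    qed
    have "\<forall>s\<in>S. P (DD g (U s))"
    proof
      fix s assume "s \<in> S"
      then have "U s \<subseteq> {-R..R} \<and> finite (U s) \<and> card (U s) = card S + 1" using U sub by blast
      then show "P (DD g (U s))" using bnd by blast
    qed
    then show ?case unfolding e by (rule Pgen)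
  qed
  then have "eventually (\<lambda>h. (DD g ((+) h ` S) - DD g S) / h \<in> {x. Q x}) (at_right 0)" by simp
  from Lim_in_closed_set[OF Qcl this trivial_limit_at_right_real lim] show ?thesis by simp
qed

lemma DD_pair:
  assumes "x \<noteq> y" shows "DD g {y, x} = (g y - g x) / (y - x)"
proof -
  have "DD g (insert y {x}) = g x / (x - y) + g y / (y - x)"
    using DD_insert[of "{x}" y g] assms by simp
  also have "\<dots> = (g y - g x) / (y - x)"
  proof -
    have d: "x - y = -(y - x)" by simp
    show ?thesis by (simp only: d divide_minus_right diff_divide_distrib)
  qed
  finally show ?thesis by simp
qed

lemma diff_from_DD2:
  fixes R M :: real
  assumes bnd: "\<forall>U. U \<subseteq> {-R..R} \<and> finite U \<and> card U = 3 \<longrightarrow> \<bar>DD g U\<bar> \<le> M"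
    and x: "x \<in> {-R<..<R}"
  shows "g differentiable (at x)"
proof -
  define q where "q y = (g y - g x) / (y - x)" for y
  define X where "X = {-R..R} - {x}"
  have lip: "(max M 0)-lipschitz_on X q"
  proof (rule lipschitz_onI)
    fix y z assume y: "y \<in> X" and z: "z \<in> X"
    show "dist (q y) (q z) \<le> max M 0 * dist y z"
    proof (cases "y = z")
      case True then show ?thesis by simp
    next
      case False
      have "DD g (insert y {x}) - DD g (insert z {x}) = (y - z) * DD g (insert y (insert z {x}))"
        by (rule DD_recur) (use y z False X_def in auto)
      moreover have "DD g (insert y {x}) = q y" "DD g (insert z {x}) = q z"
        using DD_pair y z X_def q_def by auto
      ultimately have e: "dist (q y) (q z) = \<bar>y - z\<bar> * \<bar>DD g (insert y (insert z {x}))\<bar>"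
        by (simp add: dist_real_def abs_mult)
      have "\<bar>DD g (insert y (insert z {x}))\<bar> \<le> M"
      proof -
        have "card {y, z, x} = 3" using y z False X_def by auto
        moreover have "{y, z, x} \<subseteq> {-R..R}" using y z X_def x by auto
        ultimately show ?thesis using bnd by auto
      qed
      then have "\<bar>y - z\<bar> * \<bar>DD g (insert y (insert z {x}))\<bar> \<le> \<bar>y - z\<bar> * max M 0"
        by (intro mult_left_mono) auto
      then show ?thesis unfolding e by (simp add: dist_real_def mult.commute)
    qed
  qed simp
  have atX: "at x within X = at x"
  proof -
    have "at x within X = at x within {-R..R}" unfolding X_def at_within_def by simp
    also have "\<dots> = at x" using x by (intro at_within_Icc_at) auto
    finally show ?thesis .
  qed
  have "x islimpt X" using trivial_limit_within[of x X] atX by simp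
  then have "x \<in> closure X" by (simp add: closure_def)
  then obtain l where "(q \<longlongrightarrow> l) (at x within X)"
    using uniformly_continuous_on_extension_at_closure[OF lipschitz_on_uniformly_continuous[OF lip]] by blast
  then have "(g has_real_derivative l) (at x)" unfolding has_field_derivative_iff atX[symmetric] q_def .
  then show ?thesis using real_differentiable_def by blast
qed

definition good :: "(real \<Rightarrow> real) \<Rightarrow> real \<Rightarrow> bool" where
  "good f G \<longleftrightarrow> (\<forall>u v. -1/2 \<le> u \<and> u < v \<and> v \<le> 1/2 \<longrightarrow> (\<exists>t. u \<le> t \<and> t \<le> v \<and> \<bar>f t\<bar> * (v - u) \<le> G))"

definition BDP :: "(real \<Rightarrow> real) \<Rightarrow> nat \<Rightarrow> real \<Rightarrow> real \<Rightarrow> bool" where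
  "BDP g n R M \<longleftrightarrow> (\<forall>S. S \<subseteq> {-R..R} \<and> finite S \<and> card S = n \<longrightarrow> \<bar>DD g S\<bar> \<le> M)"

definition KMset :: "nat \<Rightarrow> (real \<Rightarrow> real) \<Rightarrow> bool" where
  "KMset k f \<longleftrightarrow> (\<forall>U. U \<subseteq> {-1<..<1} \<and> finite U \<and> card U = Suc k \<longrightarrow> DD f U \<ge> 0)"

lemma kmono_KMset: "kmono k f \<Longrightarrow> KMset k f"
  unfolding KMset_def using kmono_DD by blast

lemma DD_image:
  assumes "inj_on t I" "finite I"
  shows "DD f (t ` I) = (\<Sum>m\<in>I. f (t m) / (\<Prod>l\<in>I-{m}. (t m - t l)))"
proof -
  have "DD f (t ` I) = (\<Sum>m\<in>I. f (t m) / (\<Prod>z\<in>t ` I-{t m}. (t m - z)))"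
    unfolding DD_def by (subst sum.reindex[OF assms(1)]) simp
  also have "\<dots> = (\<Sum>m\<in>I. f (t m) / (\<Prod>l\<in>I-{m}. (t m - t l)))"
  proof (rule sum.cong)
    fix m assume m: "m \<in> I"
    have "t ` I - {t m} = t ` (I - {m})" using assms(1) m by (auto simp: inj_on_def)
    moreover have "inj_on t (I - {m})" using assms(1) by (auto simp: inj_on_def)
    ultimately show "f (t m) / (\<Prod>z\<in>t ` I-{t m}. (t m - z)) = f (t m) / (\<Prod>l\<in>I-{m}. (t m - t l))"
      by (simp add: prod.reindex)
  qed simp
  finally show ?thesis .
qed

lemma ref_set:
  fixes u v G :: real and n :: nat
  assumes "good f G" "G \<ge> 0" "-1/2 \<le> u" "u < v" "v \<le> 1/2" "n \<ge> 1"
  shows "\<exists>T. finite T \<and> card T = n \<and> T \<subseteq> {u..v} \<and> \<bar>DD f T\<bar> \<le> real n / ((v - u) / (2 * real n)) ^ n * G"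
proof -
  define ll where "ll = (v - u) / (2 * real n)"
  have lpos: "ll > 0" using assms by (simp add: ll_def)
  have "\<forall>m\<in>{..<n}. \<exists>t. u + 2 * real m * ll \<le> t \<and> t \<le> u + (2 * real m + 1) * ll \<and> \<bar>f t\<bar> * ll \<le> G"
  proof
    fix m assume "m \<in> {..<n}"
    then have m: "real m + 1 \<le> real n" by simp
    have a1: "u + (2 * real m + 1) * ll \<le> v"
    proof -
      have "(2 * real m + 1) * ll \<le> (2 * real n) * ll" using m lpos by (intro mult_right_mono) auto
      also have "\<dots> = v - u" using assms by (simp add: ll_def)
      finally show ?thesis by simp
    qed
    have a0: "u \<le> u + 2 * real m * ll" using lpos by simp
    have "-1/2 \<le> u + 2 * real m * ll" "u + 2 * real m * ll < u + (2 * real m + 1) * ll" "u + (2 * real m + 1) * ll \<le> 1/2"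
      using a0 a1 assms(3,5) lpos by (linarith, simp add: algebra_simps, linarith)
    then obtain t where "u + 2 * real m * ll \<le> t" "t \<le> u + (2 * real m + 1) * ll"
       "\<bar>f t\<bar> * (u + (2 * real m + 1) * ll - (u + 2 * real m * ll)) \<le> G"
      using assms(1) unfolding good_def by blast
    then show "\<exists>t. u + 2 * real m * ll \<le> t \<and> t \<le> u + (2 * real m + 1) * ll \<and> \<bar>f t\<bar> * ll \<le> G"
      by (auto simp: algebra_simps)
  qed
  then obtain t where t: "\<forall>m\<in>{..<n}. u + 2 * real m * ll \<le> t m \<and> t m \<le> u + (2 * real m + 1) * ll \<and> \<bar>f (t m)\<bar> * ll \<le> G"
    by metis
  have sep: "\<bar>t m - t l\<bar> \<ge> ll" if "m \<in> {..<n}" "l \<in> {..<n}" "m \<noteq> l" for m l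
  proof -
    have key: "t j - t i \<ge> ll" if "i \<in> {..<n}" "j \<in> {..<n}" "i < j" for i j
    proof -
      have "real i + 1 \<le> real j" using that by simp
      then have "2 * real j * ll \<ge> (2 * real i + 2) * ll" using lpos by (intro mult_right_mono) auto
      moreover have "u + 2 * real j * ll \<le> t j" "t i \<le> u + (2 * real i + 1) * ll" using t that by auto
      ultimately show ?thesis by (simp add: algebra_simps)
    qed
    show ?thesis
    proof (cases "m < l")
      case True then show ?thesis using key[of m l] that by auto
    next
      case False then have "l < m" using that by auto
      then show ?thesis using key[of l m] that by auto
    qed
  qed
  have inj: "inj_on t {..<n}"
  proof (rule inj_onI)
    fix m l assume "m \<in> {..<n}" "l \<in> {..<n}" "t m = t l"
    then show "m = l" using sep[of m l] lpos by fastforce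
  qed
  define T where "T = t ` {..<n}"
  have cT: "card T = n" using inj by (simp add: T_def card_image)
  have sT: "T \<subseteq> {u..v}"
  proof
    fix y assume "y \<in> T"
    then obtain m where m: "m \<in> {..<n}" "y = t m" by (auto simp: T_def)
    then have "real m + 1 \<le> real n" by simp
    then have "(2 * real m + 1) * ll \<le> (2 * real n) * ll" using lpos by (intro mult_right_mono) auto
    also have "\<dots> = v - u" using assms by (simp add: ll_def)
    finally have "(2 * real m + 1) * ll \<le> v - u" .
    moreover have "u + 2 * real m * ll \<le> t m" "t m \<le> u + (2 * real m + 1) * ll" using t m by auto
    moreover have "0 \<le> 2 * real m * ll" using lpos by simp
    ultimately have "u \<le> t m" "t m \<le> v" by linarith+
    then show "y \<in> {u..v}" using m by simp
  qed
  have "\<bar>DD f T\<bar> = \<bar>\<Sum>m\<in>{..<n}. f (t m) / (\<Prod>l\<in>{..<n}-{m}. (t m - t l))\<bar>"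
    unfolding T_def by (simp add: DD_image[OF inj])
  also have "\<dots> \<le> (\<Sum>m\<in>{..<n}. \<bar>f (t m) / (\<Prod>l\<in>{..<n}-{m}. (t m - t l))\<bar>)" by (rule sum_abs)
  also have "\<dots> \<le> (\<Sum>m\<in>{..<n}. (G / ll) / ll ^ (n - 1))"
  proof (rule sum_mono)
    fix m assume m: "m \<in> {..<n}"
    have "ll ^ (n - 1) = (\<Prod>l\<in>{..<n}-{m}. ll)" using m by simp
    also have "\<dots> \<le> (\<Prod>l\<in>{..<n}-{m}. \<bar>t m - t l\<bar>)"
      by (rule prod_mono) (use sep m lpos in auto)
    also have "\<dots> = \<bar>\<Prod>l\<in>{..<n}-{m}. (t m - t l)\<bar>" by (simp add: abs_prod)
    finally have P: "ll ^ (n - 1) \<le> \<bar>\<Prod>l\<in>{..<n}-{m}. (t m - t l)\<bar>" .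
    have F: "\<bar>f (t m)\<bar> \<le> G / ll" using t m lpos by (simp add: field_simps)
    have "\<bar>f (t m) / (\<Prod>l\<in>{..<n}-{m}. (t m - t l))\<bar> = \<bar>f (t m)\<bar> / \<bar>\<Prod>l\<in>{..<n}-{m}. (t m - t l)\<bar>"
      by (simp add: abs_divide)
    also have "\<dots> \<le> (G / ll) / ll ^ (n - 1)"
      by (rule frac_le) (use F P lpos assms(2) in auto)
    finally show "\<bar>f (t m) / (\<Prod>l\<in>{..<n}-{m}. (t m - t l))\<bar> \<le> (G / ll) / ll ^ (n - 1)" .
  qed
  also have "\<dots> = real n / ll ^ n * G"
  proof -
    have "ll ^ n = ll * ll ^ (n - 1)" using assms(6) by (metis Suc_diff_1 less_le_trans zero_less_one power_Suc)
    then show ?thesis using lpos by simp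
  qed
  finally show ?thesis using cT sT by (auto simp: ll_def T_def)
qed

definition Cref :: "nat \<Rightarrow> real \<Rightarrow> real" where
  "Cref n L = real n / (L / (2 * real n)) ^ n"

lemma top_level:
  assumes "KMset k f" "good f G" "G \<ge> 0" "0 < R" "R < 1/2" "k \<ge> 1"
  shows "BDP f k R (Cref k ((1/2 - R)/2) * G)"
  unfolding BDP_def
proof (intro allI impI)
  fix S assume S: "S \<subseteq> {-R..R} \<and> finite S \<and> card S = k"
  define c where "c = (R + 1/2) / 2"
  obtain Tr where Tr: "finite Tr" "card Tr = k" "Tr \<subseteq> {c..1/2}" "\<bar>DD f Tr\<bar> \<le> real k / ((1/2 - c) / (2 * real k)) ^ k * G"
    using ref_set[OF assms(2,3), of c "1/2" k] assms by (auto simp: c_def)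
  obtain Tl where Tl: "finite Tl" "card Tl = k" "Tl \<subseteq> {-1/2..-c}" "\<bar>DD f Tl\<bar> \<le> real k / ((-c - (-1/2)) / (2 * real k)) ^ k * G"
    using ref_set[OF assms(2,3), of "-1/2" "-c" k] assms by (auto simp: c_def)
  have e1: "1/2 - c = (1/2 - R)/2" "-c - (-1/2) = (1/2 - R)/2" by (simp_all add: c_def field_simps)
  have pos: "DD f U \<ge> 0" if "U \<subseteq> {-1/2..1/2}" "finite U" "card U = k + 1" for U
  proof -
    have "U \<subseteq> {-1<..<1}" using that(1) by auto
    then show ?thesis using assms(1) that unfolding KMset_def by auto
  qed
  have SR: "S \<subseteq> {-1/2..1/2}" using S assms(5) by auto
  have cR: "R < c" "c \<le> 1/2" using assms(5) by (auto simp: c_def)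
  have "DD f S \<le> DD f Tr"
  proof (rule DD_mono_sets)
    show "\<forall>s\<in>S. \<forall>t\<in>Tr. s < t"
    proof (intro ballI)
      fix s t assume "s \<in> S" "t \<in> Tr"
      then have "s \<le> R" "c \<le> t" using S Tr(3) by auto
      then show "s < t" using cR by linarith
    qed
    have "S \<union> Tr \<subseteq> {-1/2..1/2}" using SR Tr(3) cR assms(4) by auto
    then show "\<forall>U. U \<subseteq> S \<union> Tr \<and> finite U \<and> card U = card S + 1 \<longrightarrow> 0 \<le> DD f U"
    proof (intro allI impI)
      fix U assume U: "U \<subseteq> S \<union> Tr \<and> finite U \<and> card U = card S + 1"
      then have "U \<subseteq> {-1/2..1/2}" using \<open>S \<union> Tr \<subseteq> {-1/2..1/2}\<close> by blast
      then show "0 \<le> DD f U" using pos U S Tl(2) by auto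
    qed
  qed (use S Tr in auto)
  moreover have "DD f Tl \<le> DD f S"
  proof (rule DD_mono_sets)
    show "\<forall>s\<in>Tl. \<forall>t\<in>S. s < t"
    proof (intro ballI)
      fix s t assume "s \<in> Tl" "t \<in> S"
      then have "s \<le> -c" "-R \<le> t" using S Tl(3) by auto
      then show "s < t" using cR by linarith
    qed
    have "{-1/2..-c} \<subseteq> {-1/2..1/2::real}" using cR assms(4) by auto
    then have "Tl \<union> S \<subseteq> {-1/2..1/2}" using SR Tl(3) by blast
    then show "\<forall>U. U \<subseteq> Tl \<union> S \<and> finite U \<and> card U = card Tl + 1 \<longrightarrow> 0 \<le> DD f U"
    proof (intro allI impI)
      fix U assume U: "U \<subseteq> Tl \<union> S \<and> finite U \<and> card U = card Tl + 1"
      then have "U \<subseteq> {-1/2..1/2}" using \<open>Tl \<union> S \<subseteq> {-1/2..1/2}\<close> by blast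
      then show "0 \<le> DD f U" using pos U S Tl(2) by auto
    qed
  qed (use S Tl in auto)
  ultimately show "\<bar>DD f S\<bar> \<le> Cref k ((1/2 - R)/2) * G"
    using Tr(4) Tl(4) unfolding e1 Cref_def by auto
qed

lemma step_level:
  assumes "BDP f (n+1) R2 M" "good f G" "G \<ge> 0" "0 < R" "R < R2" "R2 \<le> 1/2" "n \<ge> 1"
  shows "BDP f n R (Cref n ((R2 - R)/2) * G + real n * (2*R2) * M)"
  unfolding BDP_def
proof (intro allI impI)
  fix S assume S: "S \<subseteq> {-R..R} \<and> finite S \<and> card S = n"
  define c where "c = (R + R2) / 2"
  obtain T where T: "finite T" "card T = n" "T \<subseteq> {c..R2}" "\<bar>DD f T\<bar> \<le> real n / ((R2 - c) / (2 * real n)) ^ n * G"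
    using ref_set[OF assms(2,3), of c R2 n] assms by (auto simp: c_def)
  have e1: "R2 - c = (R2 - R)/2" by (simp add: c_def field_simps)
  have cR: "R < c" "c < R2" using assms by (auto simp: c_def)
  have disj: "S \<inter> T = {}"
  proof -
    have "\<forall>s\<in>S. s \<le> R" "\<forall>t\<in>T. c \<le> t" using S T(3) by auto
    then show ?thesis using cR by force
  qed
  have SR2: "S \<subseteq> {-R2..R2}" "T \<subseteq> {-R2..R2}" using S T(3) cR assms by auto
  have "\<bar>DD f S - DD f T\<bar> \<le> real (card S) * (2 * R2) * M"
  proof (rule DD_close_sets)
    have "S \<union> T \<subseteq> {-R2..R2}" using SR2 by auto
    then show "\<forall>U. U \<subseteq> S \<union> T \<and> finite U \<and> card U = card S + 1 \<longrightarrow> \<bar>DD f U\<bar> \<le> M"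
    proof (intro allI impI)
      fix U assume U: "U \<subseteq> S \<union> T \<and> finite U \<and> card U = card S + 1"
      then have "U \<subseteq> {-R2..R2}" using \<open>S \<union> T \<subseteq> {-R2..R2}\<close> by blast
      then show "\<bar>DD f U\<bar> \<le> M" using assms(1) U S unfolding BDP_def by auto
    qed
    show "\<forall>s\<in>S. \<forall>t\<in>T. \<bar>s - t\<bar> \<le> 2 * R2"
    proof (intro ballI)
      fix s t assume "s \<in> S" "t \<in> T"
      then have "s \<in> {-R2..R2}" "t \<in> {-R2..R2}" using SR2 by auto
      then show "\<bar>s - t\<bar> \<le> 2 * R2" by auto
    qed
  qed (use S T disj in auto)
  then have "\<bar>DD f S - DD f T\<bar> \<le> real n * (2 * R2) * M" using S by simp
  then show "\<bar>DD f S\<bar> \<le> Cref n ((R2 - R)/2) * G + real n * (2*R2) * M"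
    using T(4) S unfolding e1 Cref_def by linarith
qed

lemma all_levels:
  assumes "k \<ge> 1"
  shows "\<forall>i. i < k \<longrightarrow> (\<forall>R. 0 < R \<and> R < 1/2 \<longrightarrow>
           (\<exists>C. \<forall>f G. KMset k f \<and> good f G \<and> G \<ge> 0 \<longrightarrow> BDP f (k - i) R (C * G)))"
proof (intro allI)
  fix i show "i < k \<longrightarrow> (\<forall>R. 0 < R \<and> R < 1/2 \<longrightarrow>
           (\<exists>C. \<forall>f G. KMset k f \<and> good f G \<and> G \<ge> 0 \<longrightarrow> BDP f (k - i) R (C * G)))"
  proof (induction i)
    case 0
    show ?case using top_level assms by fastforce
  next
    case (Suc i)
    show ?case
    proof (intro impI allI)
      fix R :: real assume i: "Suc i < k" and R: "0 < R \<and> R < 1/2"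
      define R2 where "R2 = (R + 1/2) / 2"
      have R2: "0 < R2" "R2 < 1/2" "R < R2" using R by (auto simp: R2_def)
      obtain C' where C': "\<forall>f G. KMset k f \<and> good f G \<and> G \<ge> 0 \<longrightarrow> BDP f (k - i) R2 (C' * G)"
        using Suc.IH i R2 by auto
      define n where "n = k - Suc i"
      have n: "n \<ge> 1" "n + 1 = k - i" using i by (auto simp: n_def)
      have "\<forall>f G. KMset k f \<and> good f G \<and> G \<ge> 0 \<longrightarrow> BDP f n R ((Cref n ((R2 - R)/2) + real n * (2*R2) * C') * G)"
      proof (intro allI impI)
        fix f G assume h: "KMset k f \<and> good f G \<and> G \<ge> 0"
        then have "BDP f (n+1) R2 (C' * G)" using C' n by auto
        from step_level[OF this _ _ _ _ _ n(1)] h R R2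
        show "BDP f n R ((Cref n ((R2 - R)/2) + real n * (2*R2) * C') * G)"
          by (simp add: algebra_simps)
      qed
      then show "\<exists>C. \<forall>f G. KMset k f \<and> good f G \<and> G \<ge> 0 \<longrightarrow> BDP f (k - Suc i) R (C * G)"
        unfolding n_def by blast
    qed
  qed
qed

lemma BDP_transfer:
  assumes "BDP g (n+1) R M" "\<forall>x\<in>{-R<..<R}. g differentiable (at x)" "R' < R"
  shows "BDP (deriv g) n R' (real n * M)"
  unfolding BDP_def
proof (intro allI impI)
  fix S assume S: "S \<subseteq> {-R'..R'} \<and> finite S \<and> card S = n"
  show "\<bar>DD (deriv g) S\<bar> \<le> real n * M"
  proof (rule DD_deriv_bound[where P = "\<lambda>x. \<bar>x\<bar> \<le> M" and Q = "\<lambda>x. \<bar>x\<bar> \<le> real n * M"])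
    show "\<forall>U. U \<subseteq> {-R..R} \<and> finite U \<and> card U = card S + 1 \<longrightarrow> \<bar>DD g U\<bar> \<le> M"
      using assms(1) S unfolding BDP_def by auto
    show "\<bar>sum u S\<bar> \<le> real n * M" if "\<forall>s\<in>S. \<bar>u s\<bar> \<le> M" for u
    proof -
      have "\<bar>sum u S\<bar> \<le> (\<Sum>s\<in>S. \<bar>u s\<bar>)" by (rule sum_abs)
      also have "\<dots> \<le> (\<Sum>s\<in>S. M)" by (rule sum_mono) (use that in auto)
      finally show ?thesis using S by simp
    qed
    show "closed {x::real. \<bar>x\<bar> \<le> real n * M}"
      by (rule closed_Collect_le) (auto intro!: continuous_intros)
  qed (use S assms in auto)
qed

lemma pos_transfer:
  assumes "\<forall>U. U \<subseteq> {-R..R} \<and> finite U \<and> card U = n + 1 \<longrightarrow> DD g U \<ge> 0"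
    "\<forall>x\<in>{-R<..<R}. g differentiable (at x)" "R' < R"
  shows "\<forall>S. S \<subseteq> {-R'..R'} \<and> finite S \<and> card S = n \<longrightarrow> DD (deriv g) S \<ge> 0"
proof (intro allI impI)
  fix S assume S: "S \<subseteq> {-R'..R'} \<and> finite S \<and> card S = n"
  show "DD (deriv g) S \<ge> 0"
  proof (rule DD_deriv_bound[where P = "\<lambda>x. x \<ge> 0" and Q = "\<lambda>x. x \<ge> 0"])
    show "\<forall>U. U \<subseteq> {-R..R} \<and> finite U \<and> card U = card S + 1 \<longrightarrow> DD g U \<ge> 0"
      using assms(1) S by auto
    show "sum u S \<ge> 0" if "\<forall>s\<in>S. u s \<ge> 0" for u :: "real \<Rightarrow> real" using that by (intro sum_nonneg) auto
    show "closed {x::real. x \<ge> 0}" by (simp add: closed_Collect_le)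
  qed (use S assms in auto)
qed

definition rho :: "nat \<Rightarrow> real" where "rho m = 1 / (4 * (real m + 1))"

lemma rho_pos: "rho m > 0" by (simp add: rho_def)
lemma rho_le: "rho m \<le> 1/4" by (simp add: rho_def field_simps)
lemma rho_dec: "rho (Suc m) < rho m" by (simp add: rho_def field_simps)

lemma DD_single: "DD g {x} = g x" by (simp add: DD_def)

lemma deriv_levels:
  assumes "k \<ge> 1"
  shows "(m = 0 \<or> m + 2 \<le> k) \<longrightarrow>
   (\<forall>n. 1 \<le> n \<and> n + m \<le> k \<longrightarrow> (\<exists>C. \<forall>f G. KMset k f \<and> good f G \<and> G \<ge> 0 \<longrightarrow> BDP ((deriv^^m) f) n (rho m) (C*G)))
   \<and> (\<forall>f G. KMset k f \<and> good f G \<and> G \<ge> 0 \<longrightarrow> (\<forall>S. S \<subseteq> {-rho m..rho m} \<and> finite S \<and> card S = k - m + 1 \<longrightarrow> DD ((deriv^^m) f) S \<ge> 0))"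
proof (induction m)
  case 0
  have A: "\<forall>n. 1 \<le> n \<and> n + 0 \<le> k \<longrightarrow> (\<exists>C. \<forall>f G. KMset k f \<and> good f G \<and> G \<ge> 0 \<longrightarrow> BDP ((deriv^^0) f) n (rho 0) (C*G))"
  proof (intro allI impI)
    fix n assume n: "1 \<le> n \<and> n + 0 \<le> k"
    have "k - n < k" "k - (k - n) = n" using n by auto
    moreover have "0 < rho 0" "rho 0 < 1/2" by (auto simp: rho_def)
    ultimately show "\<exists>C. \<forall>f G. KMset k f \<and> good f G \<and> G \<ge> 0 \<longrightarrow> BDP ((deriv^^0) f) n (rho 0) (C*G)"
      using all_levels[OF assms] by (metis funpow_0)
  qed
  have B: "\<forall>f G. KMset k f \<and> good f G \<and> G \<ge> 0 \<longrightarrow> (\<forall>S. S \<subseteq> {-rho 0..rho 0} \<and> finite S \<and> card S = k - 0 + 1 \<longrightarrow> DD ((deriv^^0) f) S \<ge> 0)"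
  proof (intro allI impI)
    fix f G S assume h: "KMset k f \<and> good f G \<and> G \<ge> 0" and S: "S \<subseteq> {-rho 0..rho 0} \<and> finite S \<and> card S = k - 0 + 1"
    have "{-rho 0..rho 0} \<subseteq> {-1<..<1}" by (auto simp: rho_def)
    then have "S \<subseteq> {-1<..<1}" using S by blast
    then show "DD ((deriv^^0) f) S \<ge> 0" using h S unfolding KMset_def by auto
  qed
  show ?case using A B by blast
next
  case (Suc m)
  show ?case
  proof
    assume m: "Suc m = 0 \<or> Suc m + 2 \<le> k"
    then have m3: "m + 3 \<le> k" by simp
    then have IH: "\<forall>n. 1 \<le> n \<and> n + m \<le> k \<longrightarrow> (\<exists>C. \<forall>f G. KMset k f \<and> good f G \<and> G \<ge> 0 \<longrightarrow> BDP ((deriv^^m) f) n (rho m) (C*G))"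
       "\<forall>f G. KMset k f \<and> good f G \<and> G \<ge> 0 \<longrightarrow> (\<forall>S. S \<subseteq> {-rho m..rho m} \<and> finite S \<and> card S = k - m + 1 \<longrightarrow> DD ((deriv^^m) f) S \<ge> 0)"
      using Suc.IH by auto
    obtain C3 where C3: "\<forall>f G. KMset k f \<and> good f G \<and> G \<ge> 0 \<longrightarrow> BDP ((deriv^^m) f) 3 (rho m) (C3*G)"
      using IH(1)[rule_format, of 3] m3 by auto
    have dif: "\<forall>x\<in>{-rho m<..<rho m}. (deriv^^m) f differentiable (at x)" if h: "KMset k f \<and> good f G \<and> G \<ge> 0" for f G
    proof
      fix x assume x: "x \<in> {-rho m<..<rho m}"
      have "BDP ((deriv^^m) f) 3 (rho m) (C3*G)" using C3 h by blast
      then show "(deriv^^m) f differentiable (at x)"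
        by (intro diff_from_DD2[OF _ x]) (auto simp: BDP_def)
    qed
    have A: "\<forall>n. 1 \<le> n \<and> n + Suc m \<le> k \<longrightarrow> (\<exists>C. \<forall>f G. KMset k f \<and> good f G \<and> G \<ge> 0 \<longrightarrow> BDP ((deriv^^Suc m) f) n (rho (Suc m)) (C*G))"
    proof (intro allI impI)
      fix n assume n: "1 \<le> n \<and> n + Suc m \<le> k"
      then obtain C where C: "\<forall>f G. KMset k f \<and> good f G \<and> G \<ge> 0 \<longrightarrow> BDP ((deriv^^m) f) (n+1) (rho m) (C*G)"
        using IH(1)[rule_format, of "n+1"] by auto
      have "\<forall>f G. KMset k f \<and> good f G \<and> G \<ge> 0 \<longrightarrow> BDP ((deriv^^Suc m) f) n (rho (Suc m)) ((real n * C)*G)"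
      proof (intro allI impI)
        fix f G assume h: "KMset k f \<and> good f G \<and> G \<ge> 0"
        have "BDP (deriv ((deriv^^m) f)) n (rho (Suc m)) (real n * (C*G))"
          by (rule BDP_transfer[OF _ dif[OF h] rho_dec]) (use C h in blast)
        then show "BDP ((deriv^^Suc m) f) n (rho (Suc m)) ((real n * C)*G)" by (simp add: mult.assoc)
      qed
      then show "\<exists>C. \<forall>f G. KMset k f \<and> good f G \<and> G \<ge> 0 \<longrightarrow> BDP ((deriv^^Suc m) f) n (rho (Suc m)) (C*G)" by blast
    qed
    have B: "\<forall>f G. KMset k f \<and> good f G \<and> G \<ge> 0 \<longrightarrow> (\<forall>S. S \<subseteq> {-rho (Suc m)..rho (Suc m)} \<and> finite S \<and> card S = k - Suc m + 1 \<longrightarrow> DD ((deriv^^Suc m) f) S \<ge> 0)"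
    proof (intro allI, rule impI)
      fix f G assume h: "KMset k f \<and> good f G \<and> G \<ge> 0"
      have e: "k - m + 1 = (k - Suc m + 1) + 1" using m3 by simp
      have "\<forall>S. S \<subseteq> {-rho (Suc m)..rho (Suc m)} \<and> finite S \<and> card S = k - Suc m + 1 \<longrightarrow> DD (deriv ((deriv^^m) f)) S \<ge> 0"
        by (rule pos_transfer[OF _ dif[OF h] rho_dec]) (use IH(2) h e in metis)
      then show "\<forall>S. S \<subseteq> {-rho (Suc m)..rho (Suc m)} \<and> finite S \<and> card S = k - Suc m + 1 \<longrightarrow> DD ((deriv^^Suc m) f) S \<ge> 0"
        by simp
    qed
    show "(\<forall>n. 1 \<le> n \<and> n + Suc m \<le> k \<longrightarrow> (\<exists>C. \<forall>f G. KMset k f \<and> good f G \<and> G \<ge> 0 \<longrightarrow> BDP ((deriv^^Suc m) f) n (rho (Suc m)) (C*G)))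
   \<and> (\<forall>f G. KMset k f \<and> good f G \<and> G \<ge> 0 \<longrightarrow> (\<forall>S. S \<subseteq> {-rho (Suc m)..rho (Suc m)} \<and> finite S \<and> card S = k - Suc m + 1 \<longrightarrow> DD ((deriv^^Suc m) f) S \<ge> 0))"
      using A B by blast
  qed
qed

lemma leftlim_bound:
  fixes \<phi> :: "real \<Rightarrow> real"
  assumes "r > 0" and mono: "\<forall>h1 h2. -r < h1 \<and> h1 \<le> h2 \<and> h2 < 0 \<longrightarrow> \<phi> h1 \<le> \<phi> h2"
    and bnd: "\<forall>h. -r < h \<and> h < 0 \<longrightarrow> \<bar>\<phi> h\<bar> \<le> B"
  shows "\<bar>Lim (at_left 0) \<phi>\<bar> \<le> B"
proof -
  have "(\<phi> \<longlongrightarrow> Sup (\<phi> ` ({..<0} \<inter> {-r<..}))) (at 0 within ({..<0} \<inter> {-r<..}))"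
    by (rule Lim_left_bound[where K = B]) (use mono bnd in \<open>auto simp: abs_le_iff\<close>)
  moreover have "at 0 within ({..<0} \<inter> {-r<..}) = at_left (0::real)"
    by (rule at_within_nhd[of 0 "{-r<..}"]) (use assms(1) in auto)
  ultimately have L: "(\<phi> \<longlongrightarrow> Sup (\<phi> ` ({..<0} \<inter> {-r<..}))) (at_left 0)" by simp
  have ev: "eventually (\<lambda>h. norm (\<phi> h) \<le> B) (at_left (0::real))"
    by (subst eventually_at_left[of "-r"]) (use assms(1) bnd in \<open>auto intro!: exI[of _ "-r"]\<close>)
  have "Lim (at_left 0) \<phi> = Sup (\<phi> ` ({..<0} \<inter> {-r<..}))" by (rule tendsto_Lim[OF _ L]) simp
  then show ?thesis using Lim_norm_ubound[OF _ L ev] by simp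
qed

lemma coef_abs_le:
  assumes "\<bar>x::real\<bar> \<le> 1" shows "\<bar>c * x ^ n / fact n\<bar> \<le> \<bar>c\<bar>"
proof -
  have "\<bar>x ^ n\<bar> \<le> 1" using assms by (simp add: power_abs power_le_one)
  moreover have "(1::real) \<le> fact n" by simp
  ultimately have "\<bar>x ^ n\<bar> \<le> fact n" by linarith
  then have "\<bar>x ^ n\<bar> / fact n \<le> 1" by (simp add: divide_le_eq)
  then have "\<bar>c\<bar> * (\<bar>x ^ n\<bar> / fact n) \<le> \<bar>c\<bar>" by (intro mult_left_le) auto
  then show ?thesis by (simp add: abs_mult)
qed

lemma coef_bounds:
  assumes "k \<ge> 1" "i < k - 1"
  shows "\<exists>C. \<forall>f G. KMset k f \<and> good f G \<and> G \<ge> 0 \<longrightarrow> \<bar>(deriv^^i) f 0\<bar> \<le> C * G"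
proof -
  have "i + 2 \<le> k" using assms by auto
  then obtain C where C: "\<forall>f G. KMset k f \<and> good f G \<and> G \<ge> 0 \<longrightarrow> BDP ((deriv^^i) f) 1 (rho i) (C*G)"
    using deriv_levels[OF assms(1), of i] by auto
  have "\<forall>f G. KMset k f \<and> good f G \<and> G \<ge> 0 \<longrightarrow> \<bar>(deriv^^i) f 0\<bar> \<le> C * G"
  proof (intro allI impI)
    fix f G assume h: "KMset k f \<and> good f G \<and> G \<ge> 0"
    have "{0} \<subseteq> {-rho i..rho i}" using rho_pos[of i] by auto
    then have "\<bar>DD ((deriv^^i) f) {0}\<bar> \<le> C * G" using C h unfolding BDP_def by auto
    then show "\<bar>(deriv^^i) f 0\<bar> \<le> C * G" by (simp add: DD_single)
  qed
  then show ?thesis by blast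
qed

lemma leftder_bound:
  assumes "k \<ge> 1"
  shows "\<exists>C. \<forall>f G. KMset k f \<and> good f G \<and> G \<ge> 0 \<longrightarrow> \<bar>leftder k f\<bar> \<le> C * G"
proof (cases "k = 1")
  case True
  obtain C where C: "\<forall>f G. KMset k f \<and> good f G \<and> G \<ge> 0 \<longrightarrow> BDP ((deriv^^0) f) 1 (rho 0) (C*G)"
    using deriv_levels[OF assms(1), of 0] True by auto
  have P: "\<forall>f G. KMset k f \<and> good f G \<and> G \<ge> 0 \<longrightarrow> (\<forall>S. S \<subseteq> {-rho 0..rho 0} \<and> finite S \<and> card S = 2 \<longrightarrow> DD ((deriv^^0) f) S \<ge> 0)"
    using deriv_levels[OF assms(1), of 0] True by auto
  have "\<forall>f G. KMset k f \<and> good f G \<and> G \<ge> 0 \<longrightarrow> \<bar>leftder k f\<bar> \<le> C * G"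
  proof (intro allI impI)
    fix f G assume h: "KMset k f \<and> good f G \<and> G \<ge> 0"
    have "\<bar>Lim (at_left 0) f\<bar> \<le> C * G"
    proof (rule leftlim_bound[OF rho_pos[of 0]])
      show "\<forall>h1 h2. - rho 0 < h1 \<and> h1 \<le> h2 \<and> h2 < 0 \<longrightarrow> f h1 \<le> f h2"
      proof (intro allI impI)
        fix h1 h2 assume hh: "- rho 0 < h1 \<and> h1 \<le> h2 \<and> h2 < 0"
        show "f h1 \<le> f h2"
        proof (cases "h1 = h2")
          case False
          then have "h1 < h2" using hh by auto
          have "{h2, h1} \<subseteq> {-rho 0..rho 0}" using hh rho_pos[of 0] by auto
          moreover have "card {h2, h1} = 2" using False by auto
          ultimately have "DD ((deriv^^0) f) {h2, h1} \<ge> 0" using P[rule_format, OF h, of "{h2, h1}"] by simp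
          then have "(f h2 - f h1) / (h2 - h1) \<ge> 0" using DD_pair[of h1 h2 f] False by simp
          then show ?thesis using \<open>h1 < h2\<close> by (simp add: zero_le_divide_iff)
        qed simp
      qed
      show "\<forall>h. - rho 0 < h \<and> h < 0 \<longrightarrow> \<bar>f h\<bar> \<le> C * G"
      proof (intro allI impI)
        fix h assume hh: "- rho 0 < h \<and> h < 0"
        then have "{h} \<subseteq> {-rho 0..rho 0}" by auto
        then have "\<bar>DD f {h}\<bar> \<le> C * G" using C h unfolding BDP_def by auto
        then show "\<bar>f h\<bar> \<le> C * G" by (simp add: DD_single)
      qed
    qed
    then show "\<bar>leftder k f\<bar> \<le> C * G" using True by (simp add: leftder_def)
  qed
  then show ?thesis by blast
next
  case False
  define m where "m = k - 2"
  have m: "m + 2 = k" "m + 2 \<le> k" using False assms by (auto simp: m_def)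
  have "\<forall>n. 1 \<le> n \<and> n + m \<le> k \<longrightarrow> (\<exists>C. \<forall>f G. KMset k f \<and> good f G \<and> G \<ge> 0 \<longrightarrow> BDP ((deriv^^m) f) n (rho m) (C*G))"
    using deriv_levels[OF assms(1), of m] m by blast
  then obtain C where C: "\<forall>f G. KMset k f \<and> good f G \<and> G \<ge> 0 \<longrightarrow> BDP ((deriv^^m) f) 2 (rho m) (C*G)"
    using m(1) by (auto dest: spec[of _ 2])
  have P: "\<forall>f G. KMset k f \<and> good f G \<and> G \<ge> 0 \<longrightarrow> (\<forall>S. S \<subseteq> {-rho m..rho m} \<and> finite S \<and> card S = 3 \<longrightarrow> DD ((deriv^^m) f) S \<ge> 0)"
  proof -
    have "k - m + 1 = 3" using m by auto
    then show ?thesis using deriv_levels[OF assms(1), of m] m by auto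
  qed
  have "\<forall>f G. KMset k f \<and> good f G \<and> G \<ge> 0 \<longrightarrow> \<bar>leftder k f\<bar> \<le> C * G"
  proof (intro allI impI)
    fix f G assume h: "KMset k f \<and> good f G \<and> G \<ge> 0"
    define g where "g = (deriv^^m) f"
    define \<phi> where "\<phi> h = (g h - g 0) / h" for h
    have phiDD: "\<phi> h = DD g {h, 0}" if "h \<noteq> 0" for h using DD_pair[of 0 h g] that by (simp add: \<phi>_def)
    have "\<bar>Lim (at_left 0) \<phi>\<bar> \<le> C * G"
    proof (rule leftlim_bound[OF rho_pos[of m]])
      show "\<forall>h1 h2. - rho m < h1 \<and> h1 \<le> h2 \<and> h2 < 0 \<longrightarrow> \<phi> h1 \<le> \<phi> h2"
      proof (intro allI impI)
        fix h1 h2 assume hh: "- rho m < h1 \<and> h1 \<le> h2 \<and> h2 < 0"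
        show "\<phi> h1 \<le> \<phi> h2"
        proof (cases "h1 = h2")
          case False
          have r: "DD g (insert h2 {0}) - DD g (insert h1 {0}) = (h2 - h1) * DD g (insert h2 (insert h1 {0}))"
            by (rule DD_recur) (use hh False in auto)
          have nn: "DD g {h2, h1, 0} \<ge> 0"
          proof -
            have "{h2, h1, 0} \<subseteq> {-rho m..rho m}" using hh rho_pos[of m] by auto
            moreover have "card {h2, h1, 0} = 3" using False hh by auto
            ultimately show ?thesis using P h unfolding g_def by blast
          qed
          have "h2 - h1 \<ge> 0" using hh by simp
          then have "(h2 - h1) * DD g {h2, h1, 0} \<ge> 0" using nn by (rule mult_nonneg_nonneg)
          then have "DD g {h2, 0} \<ge> DD g {h1, 0}" using r by simp
          then show ?thesis using phiDD hh by auto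
        qed simp
      qed
      show "\<forall>h. - rho m < h \<and> h < 0 \<longrightarrow> \<bar>\<phi> h\<bar> \<le> C * G"
      proof (intro allI impI)
        fix h assume hh: "- rho m < h \<and> h < 0"
        then have "{h, 0} \<subseteq> {-rho m..rho m}" "card {h, 0} = 2" using rho_pos[of m] by auto
        then have "\<bar>DD g {h, 0}\<bar> \<le> C * G" using C h unfolding BDP_def g_def by auto
        then show "\<bar>\<phi> h\<bar> \<le> C * G" using phiDD hh by auto
      qed
    qed
    moreover have "leftder k f = Lim (at_left 0) \<phi>"
    proof -
      have "leftder k f = Lim (at_left 0) (\<lambda>h. (g h - g 0) / h)"
        using False by (simp add: leftder_def g_def m_def)
      moreover have "(\<lambda>h. (g h - g 0) / h) = \<phi>" by (rule ext) (simp add: \<phi>_def)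
      ultimately show ?thesis by simp
    qed
    ultimately show "\<bar>leftder k f\<bar> \<le> C * G" by simp
  qed
  then show ?thesis by blast
qed

lemma taylor_bound:
  assumes "k \<ge> 1"
  shows "\<exists>C. \<forall>f G. KMset k f \<and> good f G \<and> G \<ge> 0 \<longrightarrow> (\<forall>x\<in>{-1..1}. \<bar>Taylor k f x\<bar> \<le> C * G)"
proof -
  have "\<forall>i\<in>{..<k-1}. \<exists>C. \<forall>f G. KMset k f \<and> good f G \<and> G \<ge> 0 \<longrightarrow> \<bar>(deriv^^i) f 0\<bar> \<le> C * G"
    using coef_bounds[OF assms] by auto
  then obtain Cc where Cc: "\<forall>i\<in>{..<k-1}. \<forall>f G. KMset k f \<and> good f G \<and> G \<ge> 0 \<longrightarrow> \<bar>(deriv^^i) f 0\<bar> \<le> Cc i * G"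
    by (rule bchoice[THEN exE]) blast
  obtain CL where CL: "\<forall>f G. KMset k f \<and> good f G \<and> G \<ge> 0 \<longrightarrow> \<bar>leftder k f\<bar> \<le> CL * G"
    using leftder_bound[OF assms] by blast
  have "\<forall>f G. KMset k f \<and> good f G \<and> G \<ge> 0 \<longrightarrow> (\<forall>x\<in>{-1..1}. \<bar>Taylor k f x\<bar> \<le> (CL + (\<Sum>i<k-1. Cc i)) * G)"
  proof (intro allI impI ballI)
    fix f G x assume h: "KMset k f \<and> good f G \<and> G \<ge> 0" and x: "x \<in> {-1..1::real}"
    have ax: "\<bar>x\<bar> \<le> 1" using x by auto
    have "\<bar>Taylor k f x\<bar> \<le> \<bar>leftder k f * x ^ (k - 1) / fact (k - 1)\<bar> + \<bar>\<Sum>i<k - 1. (deriv ^^ i) f 0 * x ^ i / fact i\<bar>"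
      unfolding Taylor_def by (rule abs_triangle_ineq)
    also have "\<dots> \<le> CL * G + (\<Sum>i<k-1. Cc i * G)"
    proof (rule add_mono)
      show "\<bar>leftder k f * x ^ (k - 1) / fact (k - 1)\<bar> \<le> CL * G"
        using coef_abs_le[OF ax, of "leftder k f" "k - 1"] CL[rule_format, OF h] by linarith
      have "\<bar>\<Sum>i<k - 1. (deriv ^^ i) f 0 * x ^ i / fact i\<bar> \<le> (\<Sum>i<k - 1. \<bar>(deriv ^^ i) f 0 * x ^ i / fact i\<bar>)"
        by (rule sum_abs)
      also have "\<dots> \<le> (\<Sum>i<k-1. Cc i * G)"
      proof (rule sum_mono)
        fix i assume i: "i \<in> {..<k-1}"
        show "\<bar>(deriv ^^ i) f 0 * x ^ i / fact i\<bar> \<le> Cc i * G"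
          using coef_abs_le[OF ax, of "(deriv ^^ i) f 0" i] Cc[rule_format, OF i h] by linarith
      qed
      finally show "\<bar>\<Sum>i<k - 1. (deriv ^^ i) f 0 * x ^ i / fact i\<bar> \<le> (\<Sum>i<k-1. Cc i * G)" .
    qed
    also have "\<dots> = (CL + (\<Sum>i<k-1. Cc i)) * G" by (simp add: distrib_right sum_distrib_right)
    finally show "\<bar>Taylor k f x\<bar> \<le> (CL + (\<Sum>i<k-1. Cc i)) * G" .
  qed
  then show ?thesis by blast
qed

lemma wmin: "\<exists>m>0. \<forall>x\<in>{-1/2..1/2::real}. m \<le> jw a b x"
proof -
  have lb: "\<exists>m>0. \<forall>y\<in>{1/2..3/2::real}. m \<le> y powr c" for c :: real
  proof (cases "c \<ge> 0")
    case True
    have "\<forall>y\<in>{1/2..3/2::real}. (1/2) powr c \<le> y powr c" using True by (auto intro!: powr_mono2)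
    then show ?thesis by (intro exI[of _ "(1/2) powr c"]) auto
  next
    case False
    have "\<forall>y\<in>{1/2..3/2::real}. (3/2) powr c \<le> y powr c" using False by (auto intro!: powr_mono2')
    then show ?thesis by (intro exI[of _ "(3/2) powr c"]) auto
  qed
  obtain ma where ma: "ma > 0" "\<forall>y\<in>{1/2..3/2::real}. ma \<le> y powr a" using lb by blast
  obtain mb where mb: "mb > 0" "\<forall>y\<in>{1/2..3/2::real}. mb \<le> y powr b" using lb by blast
  have "\<forall>x\<in>{-1/2..1/2::real}. ma * mb \<le> jw a b x"
  proof
    fix x :: real assume x: "x \<in> {-1/2..1/2}"
    then have "1 + x \<in> {1/2..3/2}" "1 - x \<in> {1/2..3/2}" by auto
    then have "ma \<le> (1 + x) powr a" "mb \<le> (1 - x) powr b" using ma mb by auto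
    then show "ma * mb \<le> jw a b x" unfolding jw_def using ma mb by (intro mult_mono) auto
  qed
  then show ?thesis using ma mb by (intro exI[of _ "ma * mb"]) auto
qed

lemma emeasure_lebesgue_Icc: "u \<le> v \<Longrightarrow> emeasure lebesgue {u..v::real} = ennreal (v - u)"
  by simp

lemma Lp_lower:
  fixes g :: "real \<Rightarrow> real" and u v \<delta> :: real
  assumes p: "1 \<le> p" and uv: "u < v" "-1 \<le> u" "v \<le> 1" "v - u \<le> 1" and d: "\<delta> \<ge> 0"
    and lb: "\<forall>x\<in>{u..v}. \<delta> \<le> \<bar>g x\<bar>"
  shows "ennreal (\<delta> * (v - u)) \<le> Lp_norm p g"
proof (cases "p = \<infinity>")
  case True
  define F where "F = (\<lambda>x. ennreal \<bar>g x\<bar> * indicator {-1..1::real} x)"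
  have L: "Lp_norm p g = esssup lebesgue F" using True by (simp add: Lp_norm_def F_def)
  have "ennreal \<delta> \<le> esssup lebesgue F"
  proof (rule ccontr)
    assume "\<not> ennreal \<delta> \<le> esssup lebesgue F"
    then have lt: "esssup lebesgue F < ennreal \<delta>" by simp
    have "AE x in lebesgue. F x \<le> esssup lebesgue F" by (rule esssup_AE)
    then have "AE x in lebesgue. x \<notin> {u..v}"
    proof eventually_elim
      case (elim x)
      show ?case
      proof
        assume x: "x \<in> {u..v}"
        then have "F x = ennreal \<bar>g x\<bar>" using uv by (simp add: F_def indicator_def)
        then have "ennreal \<bar>g x\<bar> < ennreal \<delta>" using elim lt by (metis le_less_trans)
        then have "\<bar>g x\<bar> < \<delta>" by (simp add: ennreal_less_iff)
        then show False using lb x by force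
      qed
    qed
    then have "emeasure lebesgue {u..v} = 0"
      by (subst (asm) AE_iff_measurable[of "{u..v}"]) auto
    then show False using uv by simp
  qed
  moreover have "ennreal (\<delta> * (v - u)) \<le> ennreal \<delta>"
    using d uv by (intro ennreal_leI) (simp add: mult_left_le)
  ultimately show ?thesis using L by simp
next
  case False
  define r where "r = enn2real p"
  have pr: "p = ennreal r" using False by (simp add: r_def ennreal_enn2real less_top)
  have r1: "r \<ge> 1"
  proof -
    have "ennreal 1 \<le> ennreal r" using p pr by simp
    moreover have "0 \<le> r" by (simp add: r_def)
    ultimately show ?thesis using ennreal_le_iff by blast
  qed
  define I where "I = (\<integral>\<^sup>+ x. ennreal (\<bar>g x\<bar> powr r) * indicator {-1..1} x \<partial>lebesgue)"
  have L: "Lp_norm p g = (if I = \<infinity> then \<infinity> else ennreal (enn2real I powr (1 / r)))"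
    unfolding Lp_norm_def Let_def I_def r_def if_not_P[OF False] by (rule refl)
  show ?thesis
  proof (cases "\<delta> = 0")
    case True then show ?thesis by simp
  next
    case dpos: False
    then have dpos: "\<delta> > 0" using d by simp
    have "ennreal (\<delta> powr r * (v - u)) = (\<integral>\<^sup>+ x. ennreal (\<delta> powr r) * indicator {u..v} x \<partial>lebesgue)"
      using uv by (simp add: nn_integral_cmult_indicator ennreal_mult')
    also have "\<dots> \<le> I" unfolding I_def
    proof (rule nn_integral_mono)
      fix x show "ennreal (\<delta> powr r) * indicator {u..v} x \<le> ennreal (\<bar>g x\<bar> powr r) * indicator {-1..1} x"
      proof (cases "x \<in> {u..v}")
        case True
        then have "x \<in> {-1..1}" using uv by auto
        moreover have "\<delta> powr r \<le> \<bar>g x\<bar> powr r" using lb True d r1 by (intro powr_mono2) auto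
        ultimately show ?thesis using True by (simp add: ennreal_leI)
      qed simp
    qed
    finally have lowI: "ennreal (\<delta> powr r * (v - u)) \<le> I" .
    show ?thesis
    proof (cases "I = \<infinity>")
      case True then show ?thesis using L by simp
    next
      case Ifin: False
      have "\<delta> powr r * (v - u) \<le> enn2real I"
        using enn2real_mono[OF lowI] Ifin uv dpos by (simp add: less_top)
      then have "(\<delta> powr r * (v - u)) powr (1 / r) \<le> enn2real I powr (1 / r)"
        using uv dpos r1 by (intro powr_mono2) auto
      moreover have "(\<delta> powr r * (v - u)) powr (1 / r) = \<delta> * (v - u) powr (1 / r)"
        using uv dpos r1 by (simp add: powr_mult powr_powr)
      moreover have "(v - u) \<le> (v - u) powr (1 / r)"
      proof -
        have "(v - u) powr 1 \<le> (v - u) powr (1 / r)" using uv r1 by (intro powr_mono') auto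
        then show ?thesis using uv by simp
      qed
      ultimately have A: "\<delta> * (v - u) powr (1 / r) \<le> enn2real I powr (1 / r)"
        and C: "(v - u) \<le> (v - u) powr (1 / r)" by simp_all
      have "\<delta> * (v - u) \<le> \<delta> * (v - u) powr (1 / r)" using C dpos by (intro mult_left_mono) auto
      then have "\<delta> * (v - u) \<le> enn2real I powr (1 / r)" using A by linarith
      then show ?thesis using L Ifin by (simp add: ennreal_leI)
    qed
  qed
qed

lemma jw_nonneg: "jw a b x \<ge> 0" by (simp add: jw_def)

lemma jw_meas: "(\<lambda>x. jw a b x) \<in> borel_measurable borel"
  unfolding jw_def by measurable

lemma meas_leb1: "g \<in> borel_measurable borel \<Longrightarrow> (\<lambda>x. ennreal \<bar>g x\<bar> * indicator {-1..1::real} x) \<in> borel_measurable lebesgue"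
  by (rule measurable_completion) (simp add: measurable_lborel1, measurable)

lemma meas_leb2: "g \<in> borel_measurable borel \<Longrightarrow> (\<lambda>x. ennreal (\<bar>g x\<bar> powr r) * indicator {-1..1::real} x) \<in> borel_measurable lebesgue"
  by (rule measurable_completion) (simp add: measurable_lborel1, measurable)

lemma good_from_Lp:
  assumes p: "1 \<le> p" and L: "Lp_norm p (\<lambda>x. jw a b x * f x) = ennreal \<Lambda>" and "\<Lambda> \<ge> 0"
    and m: "m > 0" "\<forall>x\<in>{-1/2..1/2::real}. m \<le> jw a b x" and e: "\<epsilon> > 0"
  shows "good f ((\<Lambda> + \<epsilon>) / m)"
  unfolding good_def
proof (intro allI impI)
  fix u v :: real assume uv: "-1/2 \<le> u \<and> u < v \<and> v \<le> 1/2"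
  define G where "G = (\<Lambda> + \<epsilon>) / m"
  show "\<exists>t. u \<le> t \<and> t \<le> v \<and> \<bar>f t\<bar> * (v - u) \<le> (\<Lambda> + \<epsilon>) / m"
  proof (rule ccontr)
    assume "\<not> ?thesis"
    then have big: "\<forall>t\<in>{u..v}. G < \<bar>f t\<bar> * (v - u)" unfolding G_def by force
    have vu: "v - u > 0" using uv by simp
    have G0: "G \<ge> 0" using m e \<open>\<Lambda> \<ge> 0\<close> by (simp add: G_def)
    have lb: "\<forall>x\<in>{u..v}. m * G / (v - u) \<le> \<bar>jw a b x * f x\<bar>"
    proof
      fix x assume x: "x \<in> {u..v}"
      then have "G / (v - u) < \<bar>f x\<bar>" using big vu by (simp add: divide_less_eq)
      moreover have "m \<le> jw a b x" using m x uv by auto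
      ultimately have "m * (G / (v - u)) \<le> jw a b x * \<bar>f x\<bar>"
        using m(1) G0 vu by (intro mult_mono) auto
      then show "m * G / (v - u) \<le> \<bar>jw a b x * f x\<bar>" using jw_nonneg[of a b x] by (simp add: abs_mult)
    qed
    have "ennreal (m * G / (v - u) * (v - u)) \<le> Lp_norm p (\<lambda>x. jw a b x * f x)"
      by (rule Lp_lower[OF p]) (use uv lb m G0 vu in auto)
    moreover have "m * G / (v - u) * (v - u) = \<Lambda> + \<epsilon>" using vu m by (simp add: G_def)
    ultimately have "ennreal (\<Lambda> + \<epsilon>) \<le> ennreal \<Lambda>" using L by simp
    then show False using e \<open>\<Lambda> \<ge> 0\<close> by (simp add: ennreal_le_iff)
  qed
qed

lemma Lp_fin_form:
  assumes "p \<noteq> \<infinity>"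
  shows "Lp_norm p g = (let I = (\<integral>\<^sup>+ x. ennreal (\<bar>g x\<bar> powr enn2real p) * indicator {-1..1} x \<partial>lebesgue)
            in if I = \<infinity> then \<infinity> else ennreal (enn2real I powr (1 / enn2real p)))"
  unfolding Lp_norm_def if_not_P[OF assms] Let_def by (rule refl)

lemma Lp_upper:
  fixes g h :: "real \<Rightarrow> real" and B :: real
  assumes p: "1 \<le> p" and B: "B \<ge> 0" and bnd: "\<forall>x\<in>{-1..1}. \<bar>g x\<bar> \<le> B * \<bar>h x\<bar>"
    and gm: "g \<in> borel_measurable borel" and hm: "h \<in> borel_measurable borel"
    and hfin: "Lp_norm p h < \<infinity>"
  shows "Lp_norm p g \<le> ennreal B * Lp_norm p h"
proof (cases "p = \<infinity>")
  case True
  define Fg where "Fg = (\<lambda>x. ennreal \<bar>g x\<bar> * indicator {-1..1::real} x)"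
  define Fh where "Fh = (\<lambda>x. ennreal \<bar>h x\<bar> * indicator {-1..1::real} x)"
  have pt: "Fg x \<le> ennreal B * Fh x" for x
  proof (cases "x \<in> {-1..1}")
    case True
    then have "ennreal \<bar>g x\<bar> \<le> ennreal (B * \<bar>h x\<bar>)" using bnd by (intro ennreal_leI) auto
    then show ?thesis using True B by (simp add: Fg_def Fh_def ennreal_mult)
  qed (simp add: Fg_def Fh_def)
  have "esssup lebesgue Fg \<le> ennreal B * esssup lebesgue Fh"
  proof (rule esssup_I)
    show "Fg \<in> borel_measurable lebesgue" unfolding Fg_def by (rule meas_leb1[OF gm])
    show "AE x in lebesgue. Fg x \<le> ennreal B * esssup lebesgue Fh"
      using esssup_AE[of Fh lebesgue]
    proof eventually_elim
      case (elim x)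
      then show ?case using pt[of x] by (meson mult_left_mono order_trans zero_le)
    qed
  qed
  then show ?thesis using True by (simp add: Lp_norm_def Fg_def Fh_def)
next
  case False
  define r where "r = enn2real p"
  have pr: "p = ennreal r" using False by (simp add: r_def ennreal_enn2real less_top)
  have r1: "r \<ge> 1"
  proof -
    have "ennreal 1 \<le> ennreal r" using p pr by simp
    moreover have "0 \<le> r" by (simp add: r_def)
    ultimately show ?thesis using ennreal_le_iff by blast
  qed
  define Ig where "Ig = (\<integral>\<^sup>+ x. ennreal (\<bar>g x\<bar> powr r) * indicator {-1..1} x \<partial>lebesgue)"
  define Ih where "Ih = (\<integral>\<^sup>+ x. ennreal (\<bar>h x\<bar> powr r) * indicator {-1..1} x \<partial>lebesgue)"
  have Lg: "Lp_norm p g = (if Ig = \<infinity> then \<infinity> else ennreal (enn2real Ig powr (1 / r)))"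
    unfolding Lp_fin_form[OF False] Let_def Ig_def r_def by (rule refl)
  have Lh: "Lp_norm p h = (if Ih = \<infinity> then \<infinity> else ennreal (enn2real Ih powr (1 / r)))"
    unfolding Lp_fin_form[OF False] Let_def Ih_def r_def by (rule refl)
  have Ihfin: "Ih \<noteq> \<infinity>" using hfin Lh by auto
  have "Ig \<le> (\<integral>\<^sup>+ x. ennreal (B powr r) * (ennreal (\<bar>h x\<bar> powr r) * indicator {-1..1} x) \<partial>lebesgue)"
    unfolding Ig_def
  proof (rule nn_integral_mono)
    fix x show "ennreal (\<bar>g x\<bar> powr r) * indicator {-1..1} x \<le> ennreal (B powr r) * (ennreal (\<bar>h x\<bar> powr r) * indicator {-1..1} x)"
    proof (cases "x \<in> {-1..1}")
      case True
      have "\<bar>g x\<bar> powr r \<le> (B * \<bar>h x\<bar>) powr r" using bnd True r1 by (intro powr_mono2) auto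
      also have "\<dots> = B powr r * \<bar>h x\<bar> powr r" using B by (simp add: powr_mult)
      finally have "ennreal (\<bar>g x\<bar> powr r) \<le> ennreal (B powr r) * ennreal (\<bar>h x\<bar> powr r)"
        by (simp add: ennreal_mult[symmetric] ennreal_leI)
      then show ?thesis using True by simp
    qed simp
  qed
  also have "\<dots> = ennreal (B powr r) * Ih"
    unfolding Ih_def by (rule nn_integral_cmult) (rule meas_leb2[OF hm])
  finally have IgIh: "Ig \<le> ennreal (B powr r) * Ih" .
  then have Igfin: "Ig \<noteq> \<infinity>" using Ihfin by (auto simp: ennreal_mult_eq_top_iff top_unique)
  have "enn2real Ig \<le> B powr r * enn2real Ih"
  proof -
    have "enn2real Ig \<le> enn2real (ennreal (B powr r) * Ih)"
      using IgIh Ihfin by (intro enn2real_mono) (auto simp: ennreal_mult_less_top less_top)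
    then show ?thesis by (simp add: enn2real_mult)
  qed
  then have "enn2real Ig powr (1/r) \<le> (B powr r * enn2real Ih) powr (1/r)"
    using r1 by (intro powr_mono2) auto
  also have "\<dots> = B * enn2real Ih powr (1/r)"
    using B r1 by (simp add: powr_mult powr_powr)
  finally have "ennreal (enn2real Ig powr (1/r)) \<le> ennreal B * ennreal (enn2real Ih powr (1/r))"
    using B by (simp add: ennreal_mult[symmetric] ennreal_leI)
  then show ?thesis using Lg Lh Igfin Ihfin by simp
qed

lemma powr_12: assumes "1 \<le> y" "y \<le> (2::real)" shows "y powr c \<le> max 1 (2 powr c)"
proof (cases "c \<ge> 0")
  case True
  then have "y powr c \<le> 2 powr c" using assms by (intro powr_mono2) auto
  then show ?thesis by simp
next
  case False
  then have "y powr c \<le> 1 powr c" using assms by (intro powr_mono2') auto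
  then show ?thesis by simp
qed

lemma has_int_shift:
  assumes "c > (-1::real)"
  shows "((\<lambda>x. (1 + x) powr c) has_integral (2 powr (c+1) / (c+1))) {-1..1}"
proof -
  have "((\<lambda>x. x powr c) has_integral (2 powr (c+1) / (c+1))) (cbox 0 2)"
    using has_integral_powr_from_0[OF assms, of 2] by simp
  from has_integral_affinity'[OF this, of 1 1]
  show ?thesis by (simp add: add.commute)
qed

lemma has_int_refl:
  assumes "c > (-1::real)"
  shows "((\<lambda>x. (1 - x) powr c) has_integral (2 powr (c+1) / (c+1))) {-1..1}"
proof -
  have "((\<lambda>x. (1 + (-x)) powr c) has_integral (2 powr (c+1) / (c+1))) {-1..- (-1)}"
    using has_int_shift[OF assms] by (subst has_integral_reflect_real) simp
  then show ?thesis by simp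
qed

lemma weight_fin:
  assumes p: "1 \<le> p" and a: "a \<in> Jp p" and b: "b \<in> Jp p"
  shows "Lp_norm p (\<lambda>x. jw a b x) < \<infinity>"
proof (cases "p = \<infinity>")
  case True
  then have a0: "a \<ge> 0" "b \<ge> 0" using a b by (auto simp: Jp_def)
  define F where "F = (\<lambda>x. ennreal \<bar>jw a b x\<bar> * indicator {-1..1::real} x)"
  have "esssup lebesgue F \<le> ennreal (2 powr a * 2 powr b)"
  proof (rule esssup_I)
    show "F \<in> borel_measurable lebesgue" unfolding F_def by (rule meas_leb1[OF jw_meas])
    have "F x \<le> ennreal (2 powr a * 2 powr b)" for x
    proof (cases "x \<in> {-1..1}")
      case True
      have "(1 + x) powr a \<le> 2 powr a" "(1 - x) powr b \<le> 2 powr b" using True a0 by (auto intro!: powr_mono2)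
      then have "jw a b x \<le> 2 powr a * 2 powr b" unfolding jw_def by (intro mult_mono) auto
      then show ?thesis using True jw_nonneg[of a b x] by (simp add: F_def ennreal_leI)
    qed (simp add: F_def)
    then show "AE x in lebesgue. F x \<le> ennreal (2 powr a * 2 powr b)" by simp
  qed
  then show ?thesis using True by (simp add: Lp_norm_def F_def top.not_eq_extremum le_less_trans)
next
  case False
  define r where "r = enn2real p"
  have pr: "p = ennreal r" using False by (simp add: r_def ennreal_enn2real less_top)
  have r1: "r \<ge> 1"
  proof -
    have "ennreal 1 \<le> ennreal r" using p pr by simp
    moreover have "0 \<le> r" by (simp add: r_def)
    ultimately show ?thesis using ennreal_le_iff by blast
  qed
  have ar: "a * r > -1" "b * r > -1"
  proof -
    have "a > -1/r" "b > -1/r" using a b False by (auto simp: Jp_def r_def)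
    then show "a * r > -1" "b * r > -1" using r1 by (auto simp: divide_less_eq field_simps)
  qed
  define I where "I = (\<integral>\<^sup>+ x. ennreal (\<bar>jw a b x\<bar> powr r) * indicator {-1..1} x \<partial>lebesgue)"
  have L: "Lp_norm p (\<lambda>x. jw a b x) = (if I = \<infinity> then \<infinity> else ennreal (enn2real I powr (1 / r)))"
    unfolding Lp_fin_form[OF False] Let_def I_def r_def by (rule refl)
  define K where "K = max 1 (2 powr (a * r)) + max 1 (2 powr (b * r))"
  define V where "V = 2 powr (a * r + 1) / (a * r + 1) + 2 powr (b * r + 1) / (b * r + 1)"
  define H where "H = (\<lambda>x. K * ((1 + x) powr (a * r) + (1 - x) powr (b * r)))"
  have Hint: "(H has_integral (K * V)) {-1..1}"
    unfolding H_def V_def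
    by (intro has_integral_mult_right has_integral_add has_int_shift has_int_refl ar)
  have Hnn: "0 \<le> H x" for x unfolding H_def K_def by (intro mult_nonneg_nonneg add_nonneg_nonneg) auto
  have "I \<le> (\<integral>\<^sup>+ x. ennreal (indicator {-1..1} x * H x) \<partial>lebesgue)"
    unfolding I_def
  proof (rule nn_integral_mono)
    fix x show "ennreal (\<bar>jw a b x\<bar> powr r) * indicator {-1..1} x \<le> ennreal (indicator {-1..1} x * H x)"
    proof (cases "x \<in> {-1..1}")
      case True
      define P where "P = (1 + x) powr (a * r)"
      define Q where "Q = (1 - x) powr (b * r)"
      have PQ: "P \<ge> 0" "Q \<ge> 0" by (auto simp: P_def Q_def)
      have "\<bar>jw a b x\<bar> powr r = P * Q"
        using True by (simp add: jw_def P_def Q_def powr_mult powr_powr abs_mult)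
      also have "\<dots> \<le> H x"
      proof (cases "x \<le> 0")
        case True
        then have "Q \<le> max 1 (2 powr (b * r))" unfolding Q_def using \<open>x \<in> {-1..1}\<close> by (intro powr_12) auto
        then have "Q \<le> K" unfolding K_def by auto
        then have "P * Q \<le> P * K" using PQ by (intro mult_left_mono) auto
        also have "\<dots> \<le> K * (P + Q)" using PQ by (simp add: algebra_simps K_def)
        finally show ?thesis by (simp add: H_def P_def Q_def)
      next
        case False
        then have "P \<le> max 1 (2 powr (a * r))" unfolding P_def using \<open>x \<in> {-1..1}\<close> by (intro powr_12) auto
        then have "P \<le> K" unfolding K_def by auto
        then have "P * Q \<le> K * Q" using PQ by (intro mult_right_mono) auto
        also have "\<dots> \<le> K * (P + Q)" using PQ by (simp add: algebra_simps K_def)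
        finally show ?thesis by (simp add: H_def P_def Q_def)
      qed
      finally show ?thesis using True by (simp add: ennreal_leI)
    qed simp
  qed
  also have "\<dots> = (\<integral>\<^sup>+ x. ennreal (indicator {-1..1} x * H x) \<partial>lborel)"
    by (rule nn_integral_completion)
  also have "\<dots> = ennreal (K * V)"
    by (rule nn_integral_has_integral_lebesgue[OF _ Hint]) (use Hnn in auto)
  finally have "I \<noteq> \<infinity>" by (auto simp: top_unique)
  then show ?thesis using L by simp
qed

lemma Taylor_meas: "(\<lambda>x. Taylor k f x) \<in> borel_measurable borel"
  unfolding Taylor_def by measurable

theorem lemma2p1:
  fixes k :: nat and p :: ennreal and a b :: real
  assumes "k \<ge> 1" and "1 \<le> p" and "a \<in> Jp p" and "b \<in> Jp p"
  shows "\<exists>c::real. \<forall>f :: real \<Rightarrow> real.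
           kmono k f \<and> Lp_norm p (\<lambda>x. jw a b x * f x) < \<infinity> \<longrightarrow>
           Lp_norm p (\<lambda>x. jw a b x * Taylor k f x) \<le> ennreal c * Lp_norm p (\<lambda>x. jw a b x * f x)"
proof -
  obtain C where C: "\<forall>f G. KMset k f \<and> good f G \<and> G \<ge> 0 \<longrightarrow> (\<forall>x\<in>{-1..1}. \<bar>Taylor k f x\<bar> \<le> C * G)"
    using taylor_bound[OF assms(1)] by blast
  obtain m where m: "m > 0" "\<forall>x\<in>{-1/2..1/2::real}. m \<le> jw a b x" using wmin by blast
  define W where "W = enn2real (Lp_norm p (\<lambda>x. jw a b x))"
  have Wfin: "Lp_norm p (\<lambda>x. jw a b x) = ennreal W"
    using weight_fin[OF assms(2-4)] by (simp add: W_def ennreal_enn2real)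
  have W0: "W \<ge> 0" by (simp add: W_def)
  define C' where "C' = max C 0"
  have C'0: "C' \<ge> 0" by (simp add: C'_def)
  have "\<forall>f :: real \<Rightarrow> real.
           kmono k f \<and> Lp_norm p (\<lambda>x. jw a b x * f x) < \<infinity> \<longrightarrow>
           Lp_norm p (\<lambda>x. jw a b x * Taylor k f x) \<le> ennreal (C' * W / m) * Lp_norm p (\<lambda>x. jw a b x * f x)"
  proof (intro allI impI)
    fix f :: "real \<Rightarrow> real" assume h: "kmono k f \<and> Lp_norm p (\<lambda>x. jw a b x * f x) < \<infinity>"
    define \<Lambda> where "\<Lambda> = enn2real (Lp_norm p (\<lambda>x. jw a b x * f x))"
    have Lf: "Lp_norm p (\<lambda>x. jw a b x * f x) = ennreal \<Lambda>" using h by (simp add: \<Lambda>_def ennreal_enn2real)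
    have L0: "\<Lambda> \<ge> 0" by (simp add: \<Lambda>_def)
    have KM: "KMset k f" using h kmono_KMset by blast
    have Tb: "\<bar>Taylor k f x\<bar> \<le> C' * \<Lambda> / m" if x: "x \<in> {-1..1}" for x
    proof (rule field_le_epsilon)
      fix e :: real assume e: "e > 0"
      define \<epsilon> where "\<epsilon> = e * m / (C' + 1)"
      have eps: "\<epsilon> > 0" using e m C'0 by (simp add: \<epsilon>_def)
      have "good f ((\<Lambda> + \<epsilon>) / m)" by (rule good_from_Lp[OF assms(2) Lf L0 m eps])
      moreover have "(\<Lambda> + \<epsilon>) / m \<ge> 0" using L0 eps m by simp
      ultimately have "\<bar>Taylor k f x\<bar> \<le> C * ((\<Lambda> + \<epsilon>) / m)" using C KM x by blast
      also have "\<dots> \<le> C' * ((\<Lambda> + \<epsilon>) / m)"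
        using L0 eps m by (intro mult_right_mono) (auto simp: C'_def)
      also have "\<dots> = C' * \<Lambda> / m + C' * \<epsilon> / m" by (simp add: distrib_left add_divide_distrib)
      also have "C' * \<epsilon> / m = e * (C' / (C' + 1))"
      proof -
        have n0: "C' + 1 \<noteq> 0" "m \<noteq> 0" using C'0 m by auto
        have "\<epsilon> / m = e / (C' + 1)" using n0 by (simp add: \<epsilon>_def)
        then have "C' * \<epsilon> / m = C' * (e / (C' + 1))" by (metis times_divide_eq_right)
        then show ?thesis by simp
      qed
      also have "\<dots> \<le> e * 1" using e C'0 by (intro mult_left_mono) auto
      finally show "\<bar>Taylor k f x\<bar> \<le> C' * \<Lambda> / m + e" by simp
    qed
    have B0: "C' * \<Lambda> / m \<ge> 0" using C'0 L0 m by simp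
    have "Lp_norm p (\<lambda>x. jw a b x * Taylor k f x) \<le> ennreal (C' * \<Lambda> / m) * Lp_norm p (\<lambda>x. jw a b x)"
    proof (rule Lp_upper[OF assms(2) B0])
      show "\<forall>x\<in>{-1..1}. \<bar>jw a b x * Taylor k f x\<bar> \<le> C' * \<Lambda> / m * \<bar>jw a b x\<bar>"
      proof
        fix x :: real assume x: "x \<in> {-1..1}"
        have "\<bar>jw a b x\<bar> * \<bar>Taylor k f x\<bar> \<le> \<bar>jw a b x\<bar> * (C' * \<Lambda> / m)"
          using Tb[OF x] by (intro mult_left_mono) auto
        then show "\<bar>jw a b x * Taylor k f x\<bar> \<le> C' * \<Lambda> / m * \<bar>jw a b x\<bar>" by (simp add: abs_mult mult.commute)
      qed
      show "(\<lambda>x. jw a b x * Taylor k f x) \<in> borel_measurable borel"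
        using jw_meas Taylor_meas by measurable
      show "(\<lambda>x. jw a b x) \<in> borel_measurable borel" by (rule jw_meas)
      show "Lp_norm p (\<lambda>x. jw a b x) < \<infinity>" by (rule weight_fin[OF assms(2-4)])
    qed
    also have "\<dots> = ennreal (C' * W / m) * Lp_norm p (\<lambda>x. jw a b x * f x)"
      unfolding Wfin Lf using B0 W0 C'0 L0 m by (simp add: ennreal_mult[symmetric] field_simps)
    finally show "Lp_norm p (\<lambda>x. jw a b x * Taylor k f x) \<le> ennreal (C' * W / m) * Lp_norm p (\<lambda>x. jw a b x * f x)" .
  qed
  then show ?thesis by blast
qed

end
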